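(* Let $k\ge1$, let $t_1\ge t_2\ge\cdots\ge t_k\ge 1$ be integers, set $t_{k+1}=0$ and $n=\sum_{i=1}^k t_i$, and let \[ A_0+\lambda E_0=\begin{bmatrix}\lambda E_{1,1} & A_{1,2} & & \\ & \ddots & \ddots & \\ & & \lambda E_{k-1,k-1} & A_{k-1,k}\\ & & & \lambda E_{k,k}\end{bmatrix}\in\mathbb{C}[\lambda]^{n\times n} \] be a block bidiagonal pencil with block rows and block columns of sizes $t_1,\dots,t_k$ (unmarked blocks zero), where $E_{i,i}\in\mathbb{C}^{t_i\times t_i}$ and $A_{i,i+1}=\begin{bmatrix}\hat A_{i,i+1}\\0\end{bmatrix}\in\mathbb{C}^{t_i\times t_{i+1}}$ with $\hat A_{i,i+1}\in\mathbb{C}^{t_{i+1}\times t_{i+1}}$, and both $\hat A_{i,i+1}$ and $E_{i,i}$ invertible upper triangular. Let $\hat Z_i:=-E_{i,i}^{-1}A_{i,i+1}\in\mathbb{C}^{t_i\times t_{i+1}}$ for $i=1,\dots,k-1$. For $j=1,\dots,k$ let $X_j(\lambda)\in\mathbb{C}[\lambda]^{n\times t_j}$ be the block vector whose $\ell$-th block ($\ell=1,\dots,j$) is $\lambda^{\ell-1}\hat Z_\ell\hat Z_{\ell+1}\cdots\hat Z_{j-1}$ (for $\ell=j$ this is $\lambda^{j-1}I_{t_j}$) and whose blocks $j+1,\dots,k$ are zero, and let $Q_j(\lambda):=X_j(\lambda)\,[e_{t_{j+1}+1}\ \cdots\ e_{t_j}]\in\mathbb{C}[\lambda]^{n\times(t_j-t_{j+1})}$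 consist of the rightmost $t_j-t_{j+1}$ columns of $X_j(\lambda)$ (here $e_p$ denotes the $p$-th standard basis vector of $\mathbb{C}^{t_j}$). Then the only eigenvalue of $A_0+\lambda E_0$ is $\lambda=0$, and the columns of $Q_k(\lambda),Q_{k-1}(\lambda),\dots,Q_1(\lambda)$ together form a maximal set of root polynomials at $0$ for $A_0+\lambda E_0$.
   Context: An eigenvalue of a pencil $P(\lambda)$ is $\mu\in\mathbb{C}$ with $\operatorname{rank}_{\mathbb{C}}P(\mu)$ smaller than its rank over $\mathbb{C}(\lambda)$. Let $N(\lambda)$ be a right minimal basis of $P$ (a polynomial basis of $\{x\in\mathbb{C}(\lambda)^n:Px=0\}$ with minimal sum of column degrees; empty if $P$ is regular). For $k\ge1$, a polynomial vector $x$ is a zero direction of order $k$ at $\lambda_0$ if $x(\lambda_0)\ne0$ and $P(\lambda)x(\lambda)=(\lambda-\lambda_0)^kw(\lambda)$ with $w$ polynomial, $w(\lambda_0)\ne0$; it is a root polynomial of order $k$ if moreover $[N(\lambda_0)\ x(\lambda_0)]$ has full column rank. Zero directions $r_1,\dots,r_s$ of orders $k_1,\dots,k_s$ are $\lambda_0$-independent if $[N(\lambda_0)\ r_1(\lambda_0)\cdots r_s(\lambda_0)]$ has full column rank; such a set is complete if no larger $\lambda_0$-independent set exists; it is ordered if $k_1\ge\cdots\ge k_s>0$; a complete ordered set is maximal if for no $j$ is there a root polynomial $\tilde r$ of order $k>k_j$ with $[N(\lambda_0)\ r_1(\lambda_0)\cdots r_{j-1}(\lambda_0)\ \tilde r(\lambda_0)]$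 of full column rank. (The columns of $Q_j$ have order $j$, so listing $Q_k,\dots,Q_1$ gives non-increasing orders.) *)

theory Defs
  imports "Jordan_Normal_Form.DL_Rank" "Jordan_Normal_Form.Gauss_Jordan_Elimination"
    "HOL-Computational_Algebra.Polynomial_Factorial"
begin

definition eval_mat :: "complex poly mat \<Rightarrow> complex \<Rightarrow> complex mat" where
  "eval_mat P \<mu> = map_mat (\<lambda>p. poly p \<mu>) P"

definition eval_vec :: "complex poly vec \<Rightarrow> complex \<Rightarrow> complex vec" where
  "eval_vec x \<mu> = map_vec (\<lambda>p. poly p \<mu>) x"

definition fract_mat :: "complex poly mat \<Rightarrow> complex poly fract mat" where
  "fract_mat P = map_mat to_fract P"

definition fract_vec :: "complex poly vec \<Rightarrow> complex poly fract vec" where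
  "fract_vec x = map_vec to_fract x"

definition rank_C :: "complex mat \<Rightarrow> nat" where
  "rank_C M = vec_space.rank (dim_row M) M"

definition rank_rat :: "complex poly mat \<Rightarrow> nat" where
  "rank_rat P = vec_space.rank (dim_row P) (fract_mat P)"

definition is_eigenvalue :: "complex poly mat \<Rightarrow> complex \<Rightarrow> bool" where
  "is_eigenvalue P \<mu> \<longleftrightarrow> rank_C (eval_mat P \<mu>) < rank_rat P"

definition full_col_rank :: "nat \<Rightarrow> complex vec list \<Rightarrow> bool" where
  "full_col_rank n cs \<longleftrightarrow> rank_C (mat_of_cols n cs) = length cs"

definition vec_degree :: "complex poly vec \<Rightarrow> nat" where
  "vec_degree x = Max (insert 0 (degree ` set\<^sub>v x))"

definition right_null_space :: "complex poly mat \<Rightarrow> complex poly fract vec set" where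
  "right_null_space P = {x \<in> carrier_vec (dim_col P). fract_mat P *\<^sub>v x = 0\<^sub>v (dim_row P)}"

definition is_poly_null_basis :: "complex poly mat \<Rightarrow> complex poly vec list \<Rightarrow> bool" where
  "is_poly_null_basis P N \<longleftrightarrow>
     (\<forall>x \<in> set N. x \<in> carrier_vec (dim_col P) \<and> fract_vec x \<in> right_null_space P) \<and>
     vec_space.rank (dim_col P) (mat_of_cols (dim_col P) (map fract_vec N)) = length N \<and>
     (\<forall>y \<in> right_null_space P. \<exists>c \<in> carrier_vec (length N).
         y = mat_of_cols (dim_col P) (map fract_vec N) *\<^sub>v c)"

definition is_right_minimal_basis :: "complex poly mat \<Rightarrow> complex poly vec list \<Rightarrow> bool" where
  "is_right_minimal_basis P N \<longleftrightarrow> is_poly_null_basis P N \<and>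
     (\<forall>N'. is_poly_null_basis P N' \<longrightarrow>
        (\<Sum>x\<leftarrow>N. vec_degree x) \<le> (\<Sum>x\<leftarrow>N'. vec_degree x))"

definition zero_direction :: "complex poly mat \<Rightarrow> complex \<Rightarrow> complex poly vec \<Rightarrow> nat \<Rightarrow> bool" where
  "zero_direction P z0 x k \<longleftrightarrow> k \<ge> 1 \<and> x \<in> carrier_vec (dim_col P) \<and>
     eval_vec x z0 \<noteq> 0\<^sub>v (dim_col P) \<and>
     (\<exists>w \<in> carrier_vec (dim_row P). P *\<^sub>v x = ([:-z0, 1:] ^ k) \<cdot>\<^sub>v w \<and>
        eval_vec w z0 \<noteq> 0\<^sub>v (dim_row P))"

definition root_polynomial ::
  "complex poly mat \<Rightarrow> complex poly vec list \<Rightarrow> complex \<Rightarrow> complex poly vec \<Rightarrow> nat \<Rightarrow> bool" where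
  "root_polynomial P N z0 x k \<longleftrightarrow> zero_direction P z0 x k \<and>
     full_col_rank (dim_col P) (map (\<lambda>v. eval_vec v z0) N @ [eval_vec x z0])"

definition indep_zero_dirs ::
  "complex poly mat \<Rightarrow> complex poly vec list \<Rightarrow> complex \<Rightarrow> (complex poly vec \<times> nat) list \<Rightarrow> bool" where
  "indep_zero_dirs P N z0 rs \<longleftrightarrow> (\<forall>(r, k) \<in> set rs. zero_direction P z0 r k) \<and>
     full_col_rank (dim_col P) (map (\<lambda>v. eval_vec v z0) (N @ map fst rs))"

definition complete_zero_dirs ::
  "complex poly mat \<Rightarrow> complex poly vec list \<Rightarrow> complex \<Rightarrow> (complex poly vec \<times> nat) list \<Rightarrow> bool" where
  "complete_zero_dirs P N z0 rs \<longleftrightarrow> indep_zero_dirs P N z0 rs \<and>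
     \<not> (\<exists>rs'. indep_zero_dirs P N z0 rs' \<and> length rs' > length rs)"

definition ordered_zero_dirs :: "(complex poly vec \<times> nat) list \<Rightarrow> bool" where
  "ordered_zero_dirs rs \<longleftrightarrow> sorted_wrt (\<ge>) (map snd rs) \<and> (\<forall>(r, k) \<in> set rs. k > 0)"

text \<open>Maximal set of root polynomials at lambda0 (positions j are 0-based here).\<close>
definition maximal_root_polys ::
  "complex poly mat \<Rightarrow> complex poly vec list \<Rightarrow> complex \<Rightarrow> (complex poly vec \<times> nat) list \<Rightarrow> bool" where
  "maximal_root_polys P N z0 rs \<longleftrightarrow> complete_zero_dirs P N z0 rs \<and> ordered_zero_dirs rs \<and>
     \<not> (\<exists>j < length rs. \<exists>r' k'. root_polynomial P N z0 r' k' \<and> k' > snd (rs ! j) \<and>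
          full_col_rank (dim_col P)
            (map (\<lambda>v. eval_vec v z0) (N @ map fst (take j rs) @ [r'])))"

text \<open>Block sizes t 1, ..., t k, with the convention t (k+1) = 0 (and 0 beyond).\<close>
definition tsz :: "(nat \<Rightarrow> nat) \<Rightarrow> nat \<Rightarrow> nat \<Rightarrow> nat" where
  "tsz t k i = (if 1 \<le> i \<and> i \<le> k then t i else 0)"

text \<open>Offset (0-based) of block i (1-based): t 1 + ... + t (i-1).\<close>
definition boff :: "(nat \<Rightarrow> nat) \<Rightarrow> nat \<Rightarrow> nat" where
  "boff t i = (\<Sum>l = 1..<i. t l)"

definition block_entry :: "nat \<Rightarrow> nat \<Rightarrow> 'a::zero mat \<Rightarrow> nat \<Rightarrow> nat \<Rightarrow> 'a" where
  "block_entry ro co B r c =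
     (if ro \<le> r \<and> r < ro + dim_row B \<and> co \<le> c \<and> c < co + dim_col B
      then B $$ (r - ro, c - co) else 0)"

definition Ablk :: "(nat \<Rightarrow> nat) \<Rightarrow> (nat \<Rightarrow> complex mat) \<Rightarrow> nat \<Rightarrow> complex mat" where
  "Ablk t Ahat i = mat (t i) (t (Suc i))
     (\<lambda>(r, c). if r < t (Suc i) then Ahat i $$ (r, c) else 0)"

definition A0 :: "(nat \<Rightarrow> nat) \<Rightarrow> nat \<Rightarrow> (nat \<Rightarrow> complex mat) \<Rightarrow> complex mat" where
  "A0 t k Ahat = mat (\<Sum>i = 1..k. t i) (\<Sum>i = 1..k. t i)
     (\<lambda>(r, c). \<Sum>i = 1..<k. block_entry (boff t i) (boff t (Suc i)) (Ablk t Ahat i) r c)"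

definition E0 :: "(nat \<Rightarrow> nat) \<Rightarrow> nat \<Rightarrow> (nat \<Rightarrow> complex mat) \<Rightarrow> complex mat" where
  "E0 t k E = mat (\<Sum>i = 1..k. t i) (\<Sum>i = 1..k. t i)
     (\<lambda>(r, c). \<Sum>i = 1..k. block_entry (boff t i) (boff t i) (E i) r c)"

definition pencil :: "complex mat \<Rightarrow> complex mat \<Rightarrow> complex poly mat" where
  "pencil A E = mat (dim_row A) (dim_col A) (\<lambda>(r, c). [:A $$ (r, c), E $$ (r, c):])"

definition Zhat :: "(nat \<Rightarrow> nat) \<Rightarrow> (nat \<Rightarrow> complex mat) \<Rightarrow> (nat \<Rightarrow> complex mat) \<Rightarrow> nat \<Rightarrow> complex mat" where
  "Zhat t E Ahat i = - (the (mat_inverse (E i)) * Ablk t Ahat i)"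

definition Zprod :: "(nat \<Rightarrow> nat) \<Rightarrow> (nat \<Rightarrow> complex mat) \<Rightarrow> (nat \<Rightarrow> complex mat) \<Rightarrow> nat \<Rightarrow> nat \<Rightarrow> complex mat" where
  "Zprod t E Ahat l j = foldr (\<lambda>i M. Zhat t E Ahat i * M) [l..<j] (1\<^sub>m (t j))"

definition Xmat :: "(nat \<Rightarrow> nat) \<Rightarrow> nat \<Rightarrow> (nat \<Rightarrow> complex mat) \<Rightarrow> (nat \<Rightarrow> complex mat) \<Rightarrow> nat \<Rightarrow> complex poly mat" where
  "Xmat t k E Ahat j = mat (\<Sum>i = 1..k. t i) (t j)
     (\<lambda>(r, c). \<Sum>l = 1..j. block_entry (boff t l) 0
                  (map_mat (\<lambda>a. monom a (l - 1)) (Zprod t E Ahat l j)) r c)"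

definition Qcols :: "(nat \<Rightarrow> nat) \<Rightarrow> nat \<Rightarrow> (nat \<Rightarrow> complex mat) \<Rightarrow> (nat \<Rightarrow> complex mat) \<Rightarrow> nat
    \<Rightarrow> (complex poly vec \<times> nat) list" where
  "Qcols t k E Ahat j = map (\<lambda>p. (col (Xmat t k E Ahat j) p, j)) [tsz t k (Suc j)..<t j]"

definition all_Qcols :: "(nat \<Rightarrow> nat) \<Rightarrow> nat \<Rightarrow> (nat \<Rightarrow> complex mat) \<Rightarrow> (nat \<Rightarrow> complex mat)
    \<Rightarrow> (complex poly vec \<times> nat) list" where
  "all_Qcols t k E Ahat = concat (map (Qcols t k E Ahat) (rev [1..<Suc k]))"

end

theory Submission
  imports Defs
begin

lemma (in vec_space) rank_full_if_ker:
  assumes A: "A \<in> carrier_mat n nc"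
    and ker: "\<And>v. v \<in> carrier_vec nc \<Longrightarrow> A *\<^sub>v v = 0\<^sub>v n \<Longrightarrow> v = 0\<^sub>v nc"
  shows "rank A = nc"
proof -
  have uv: "\<And>i. i < nc \<Longrightarrow> A *\<^sub>v unit_vec nc i = col A i"
    using A by (intro eq_vecI) (auto simp: mult_mat_vec_def)
  have dist: "distinct (cols A)"
  proof (rule ccontr)
    assume "\<not> distinct (cols A)"
    then obtain i j where ij: "i\<noteq>j" "(cols A) ! i = (cols A) ! j" "i<length (cols A)" "j<length (cols A)"
      using distinct_conv_nth by blast
    then have c: "col A i = col A j" "i<nc" "j<nc" using A by auto
    define v :: "'a vec" where "v = unit_vec nc i - unit_vec nc j"
    have vc: "v \<in> carrier_vec nc" unfolding v_def by auto
    have "A *\<^sub>v v = A *\<^sub>v unit_vec nc i - A *\<^sub>v unit_vec nc j"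
      unfolding v_def using A by (simp add: mult_minus_distrib_mat_vec)
    also have "\<dots> = 0\<^sub>v n" using A c by (simp add: uv)
    finally have "v = 0\<^sub>v nc" using ker vc by auto
    moreover have "v $ i = 1" unfolding v_def using c ij by auto
    ultimately show False using c by auto
  qed
  have "lin_indpt (set (cols A))"
  proof
    assume "lin_dep (set (cols A))"
    then obtain v where "v \<in> carrier_vec nc" "v \<noteq> 0\<^sub>v nc" "A *\<^sub>v v = 0\<^sub>v n"
      using lin_depE[OF A _ dist] by blast
    then show False using ker by auto
  qed
  then show ?thesis using lin_indpt_full_rank[OF A dist] by metis
qed

lemma (in vec_space) ker_if_rank_full:
  assumes A: "A \<in> carrier_mat n nc"
    and r: "rank A = nc"
    and v: "v \<in> carrier_vec nc" and Av: "A *\<^sub>v v = 0\<^sub>v n"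
  shows "v = 0\<^sub>v nc"
proof (cases "distinct (cols A)")
  case True
  then have "lin_indpt (set (cols A))" using full_rank_lin_indpt[OF A r] by auto
  then show ?thesis using lin_depI[OF A v _ Av True] by auto
next
  case False
  obtain S where S: "maximal S (\<lambda>T. T \<subseteq> set (cols A) \<and> lin_indpt T)"
    using maximal_exists[of "(\<lambda>T. T \<subseteq> set (cols A) \<and> lin_indpt T)" "card (set (cols A))" "{}"]
    by (meson List.finite_set card_mono empty_iff empty_subsetI finite_lin_indpt2 rev_finite_subset)
  then have "card S \<le> card (set (cols A))" by (simp add: card_mono maximal_def)
  moreover have "card (set (cols A)) < nc"
    using False A by (metis card_distinct card_length cols_length carrier_matD(2) order_le_neq_trans)
  ultimately have "card S < nc" by simp
  then show ?thesis using rank_card_indpt[OF A S] r by simp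
qed

lemma full_col_rank_iff:
  assumes cs: "set cs \<subseteq> carrier_vec n"
  shows "full_col_rank n cs \<longleftrightarrow>
    (\<forall>v \<in> carrier_vec (length cs). mat_of_cols n cs *\<^sub>v v = 0\<^sub>v n \<longrightarrow> v = 0\<^sub>v (length cs))"
proof -
  have M: "mat_of_cols n cs \<in> carrier_mat n (length cs)" by simp
  have r: "rank_C (mat_of_cols n cs) = vec_space.rank n (mat_of_cols n cs)"
    unfolding rank_C_def by simp
  show ?thesis unfolding full_col_rank_def r
  proof (intro iffI ballI impI)
    fix v :: "complex vec" assume "vec_space.rank n (mat_of_cols n cs) = length cs"
      "v \<in> carrier_vec (length cs)" "mat_of_cols n cs *\<^sub>v v = 0\<^sub>v n"
    then show "v = 0\<^sub>v (length cs)" using vec_space.ker_if_rank_full[OF M] by blast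
  next
    assume "\<forall>v\<in>carrier_vec (length cs). mat_of_cols n cs *\<^sub>v v = 0\<^sub>v n \<longrightarrow> v = 0\<^sub>v (length cs)"
    then show "vec_space.rank n (mat_of_cols n cs) = length cs"
      using vec_space.rank_full_if_ker[OF M] by blast
  qed
qed

lemma not_full_col_rank_support:
  assumes cs: "set cs \<subseteq> carrier_vec n"
    and supp: "\<And>c r. c \<in> set cs \<Longrightarrow> m \<le> r \<Longrightarrow> r < n \<Longrightarrow> c $ r = 0"
    and ml: "m < length cs"
  shows "\<not> full_col_rank n cs"
proof -
  define L where "L = length cs"
  define M where "M = mat_of_cols n cs"
  define M' :: "complex mat" where "M' = mat L L (\<lambda>(i,j). if i < m \<and> i < n then M $$ (i,j) else 0)"
  have M'c: "M' \<in> carrier_mat L L" unfolding M'_def by auto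
  have M'e: "\<And>i j. i<L \<Longrightarrow> j<L \<Longrightarrow> M' $$ (i,j) = (if i<m \<and> i<n then M$$(i,j) else 0)"
    unfolding M'_def by simp
  have "M' = mat\<^sub>r L L (\<lambda>i. if i = L - 1 then 0\<^sub>v L else row M' i)"
  proof (rule eq_matI)
    fix i j assume ij: "i < dim_row (mat\<^sub>r L L (\<lambda>i. if i = L - 1 then 0\<^sub>v L else row M' i))"
      "j < dim_col (mat\<^sub>r L L (\<lambda>i. if i = L - 1 then 0\<^sub>v L else row M' i))"
    then have "i < L" "j < L" by auto
    then show "M' $$ (i, j) = mat\<^sub>r L L (\<lambda>i. if i = L - 1 then 0\<^sub>v L else row M' i) $$ (i, j)"
      using M'c M'e ml unfolding L_def by auto
  qed (use M'c in auto)
  then have "det M' = 0"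
    using det_row_0[of "L - 1" L "\<lambda>i. row M' i"] ml M'c unfolding L_def by auto
  then obtain v where v: "v \<in> carrier_vec L" "v \<noteq> 0\<^sub>v L" "M' *\<^sub>v v = 0\<^sub>v L"
    using det_0_iff_vec_prod_zero_field[OF M'c] by auto
  have "M *\<^sub>v v = 0\<^sub>v n"
  proof (rule eq_vecI)
    fix i assume i: "i < dim_vec (0\<^sub>v n :: complex vec)"
    show "(M *\<^sub>v v) $ i = 0\<^sub>v n $ i"
    proof (cases "i < m")
      case True
      then have iL: "i < L" using ml unfolding L_def by auto
      have "row M i = row M' i"
        using True i iL M'c M'e by (intro eq_vecI) (auto simp: M_def L_def)
      then have "(M *\<^sub>v v) $ i = (M' *\<^sub>v v) $ i"
        using i iL M'c by (simp add: M_def)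
      then show ?thesis using v(3) iL i by auto
    next
      case False
      have "(M *\<^sub>v v) $ i = row M i \<bullet> v" using i by (simp add: M_def)
      also have "\<dots> = (\<Sum>j<L. cs ! j $ i * v $ j)"
        using i v(1) unfolding scalar_prod_def M_def L_def
        by (intro sum.cong) (auto simp: mat_of_cols_def)
      also have "\<dots> = 0" using supp False i by (auto intro!: sum.neutral simp: L_def)
      finally show ?thesis using i by auto
    qed
  qed (auto simp: M_def)
  show ?thesis
  proof
    assume "full_col_rank n cs"
    then have "v = 0\<^sub>v L" using full_col_rank_iff[OF cs] v(1) \<open>M *\<^sub>v v = 0\<^sub>v n\<close>
      unfolding M_def L_def by blast
    with v(2) show False by simp
  qed
qed

lemma window_sum:
  fixes f g :: "nat \<Rightarrow> 'a::comm_semiring_1"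
  assumes "co + w \<le> N"
  shows "(\<Sum>c<N. (if co \<le> c \<and> c < co + w then f (c - co) else 0) * g c) = (\<Sum>q<w. f q * g (co + q))"
proof -
  have "(\<Sum>c<N. (if co \<le> c \<and> c < co + w then f (c - co) else 0) * g c)
      = (\<Sum>c\<in>{co..<co+w}. f (c - co) * g c)"
    using assms by (intro sum.mono_neutral_cong_right) auto
  also have "\<dots> = (\<Sum>q\<in>{0..<w}. f q * g (co + q))"
    by (subst sum.atLeastLessThan_shift_0) (simp add: comp_def)
  finally show ?thesis by (simp add: atLeast0LessThan)
qed

lemma boff_Suc: "1 \<le> i \<Longrightarrow> boff t (Suc i) = boff t i + t i"
  unfolding boff_def by (simp add: sum.atLeastLessThan_Suc)

lemma boff_mono: "i \<le> j \<Longrightarrow> boff t i \<le> boff t j"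
  unfolding boff_def by (intro sum_mono2) auto

lemma boff_1[simp]: "boff t (Suc 0) = 0" unfolding boff_def by simp

lemma boff_Suc_le: "1 \<le> i \<Longrightarrow> i < j \<Longrightarrow> boff t i + t i \<le> boff t j"
  using boff_Suc[of i t] boff_mono[of "Suc i" j t] by simp

lemma boff_unique:
  assumes "1 \<le> l" "1 \<le> i" "a < t i" "boff t l \<le> boff t i + a" "boff t i + a < boff t l + t l"
  shows "l = i"
proof (rule ccontr)
  assume "l \<noteq> i"
  then consider "l < i" | "i < l" by linarith
  then show False
  proof cases
    case 1 then show False using boff_Suc_le[of l i t] assms by simp
  next
    case 2 then show False using boff_Suc_le[of i l t] assms by simp
  qed
qed

lemma boff_n: "boff t (Suc K) = (\<Sum>i=1..K. t i)"
  unfolding boff_def by (simp add: atLeastLessThanSuc_atLeastAtMost)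

lemma boff_decomp:
  "r < boff t (Suc K) \<Longrightarrow> \<exists>i a. 1 \<le> i \<and> i \<le> K \<and> a < t i \<and> r = boff t i + a"
proof (induction K)
  case 0 then show ?case by simp
next
  case (Suc K)
  show ?case
  proof (cases "r < boff t (Suc K)")
    case True then show ?thesis using Suc.IH by fastforce
  next
    case False
    then show ?thesis using Suc.prems boff_Suc[of "Suc K" t]
      by (intro exI[of _ "Suc K"] exI[of _ "r - boff t (Suc K)"]) auto
  qed
qed

lemma block_sum:
  fixes B :: "nat \<Rightarrow> 'a::comm_monoid_add mat"
  assumes S: "finite S" "\<And>l. l \<in> S \<Longrightarrow> 1 \<le> l" "\<And>l. l \<in> S \<Longrightarrow> dim_row (B l) = t l"
    and i: "1 \<le> i" "a < t i"
  shows "(\<Sum>l\<in>S. block_entry (boff t l) (co l) (B l) (boff t i + a) c)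
       = (if i \<in> S then block_entry (boff t i) (co i) (B i) (boff t i + a) c else 0)"
proof -
  have z: "block_entry (boff t l) (co l) (B l) (boff t i + a) c = 0" if "l \<in> S" "l \<noteq> i" for l
    using boff_unique[of l i a t] that S i unfolding block_entry_def by auto
  show ?thesis
  proof (cases "i \<in> S")
    case True
    then show ?thesis using S(1) z by (simp add: sum.remove[OF S(1) True] sum.neutral)
  next
    case False
    then show ?thesis using z by (auto intro!: sum.neutral)
  qed
qed

lemma block_entry_in:
  assumes "dim_row B = t i" "a < t i"
  shows "block_entry (boff t i) co B (boff t i + a) c
       = (if co \<le> c \<and> c < co + dim_col B then B $$ (a, c - co) else 0)"
  using assms unfolding block_entry_def by auto

definition utz :: "'a::zero mat \<Rightarrow> bool" where
  "utz A \<longleftrightarrow> (\<forall>a b. a < dim_row A \<longrightarrow> b < dim_col A \<longrightarrow> b < a \<longrightarrow> A $$ (a,b) = 0)"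

lemma back_subst:
  fixes U :: "'a::field mat"
  assumes U: "U \<in> carrier_mat m m" and ut: "utz U" and d: "\<And>a. a < m \<Longrightarrow> U $$ (a,a) \<noteq> 0"
    and y: "y \<in> carrier_vec m"
    and z: "\<And>a. b \<le> a \<Longrightarrow> a < m \<Longrightarrow> (U *\<^sub>v y) $ a = 0"
  shows "b \<le> a \<Longrightarrow> a < m \<Longrightarrow> y $ a = 0"
proof (induction "m - a" arbitrary: a rule: less_induct)
  case less
  have "(U *\<^sub>v y) $ a = (\<Sum>c\<in>{0..<m}. U $$ (a,c) * y $ c)"
    using U y less by (simp add: scalar_prod_def)
  also have "\<dots> = U $$ (a,a) * y $ a + (\<Sum>c\<in>{0..<m} - {a}. U $$ (a,c) * y $ c)"
    using less by (simp add: sum.remove)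
  also have "(\<Sum>c\<in>{0..<m} - {a}. U $$ (a,c) * y $ c) = 0"
  proof (intro sum.neutral ballI)
    fix c assume c: "c \<in> {0..<m} - {a}"
    show "U $$ (a,c) * y $ c = 0"
    proof (cases "c < a")
      case True then show ?thesis using ut U less c unfolding utz_def by auto
    next
      case False
      then have "y $ c = 0" using less c by (intro less.hyps) auto
      then show ?thesis by simp
    qed
  qed
  finally have "U $$ (a,a) * y $ a = 0" using z less by simp
  then show ?case using d less by simp
qed

lemma utz_mult:
  fixes A B :: "'a::comm_ring_1 mat"
  assumes A: "A \<in> carrier_mat na nb" and B: "B \<in> carrier_mat nb nc" and "utz A" "utz B"
  shows "utz (A * B)"
  unfolding utz_def
proof (intro allI impI)
  fix a b assume ab: "a < dim_row (A * B)" "b < dim_col (A * B)" "b < a"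
  have "(A * B) $$ (a,b) = (\<Sum>l\<in>{0..<nb}. A $$ (a,l) * B $$ (l,b))"
    using A B ab by (simp add: scalar_prod_def)
  also have "\<dots> = 0"
  proof (intro sum.neutral ballI)
    fix l assume l: "l \<in> {0..<nb}"
    show "A $$ (a,l) * B $$ (l,b) = 0"
    proof (cases "l < a")
      case True then show ?thesis using assms l ab unfolding utz_def by auto
    next
      case False then have "b < l" using ab by auto
      then show ?thesis using assms l ab unfolding utz_def by auto
    qed
  qed
  finally show "(A * B) $$ (a,b) = 0" .
qed

lemma utz_mult_diag:
  fixes A B :: "'a::comm_ring_1 mat"
  assumes A: "A \<in> carrier_mat na nb" and B: "B \<in> carrier_mat nb nc" and "utz A" "utz B"
    and p: "p < na" "p < nb" "p < nc"
  shows "(A * B) $$ (p,p) = A $$ (p,p) * B $$ (p,p)"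
proof -
  have "(A * B) $$ (p,p) = (\<Sum>l\<in>{0..<nb}. A $$ (p,l) * B $$ (l,p))"
    using A B p by (simp add: scalar_prod_def)
  also have "\<dots> = A $$ (p,p) * B $$ (p,p) + (\<Sum>l\<in>{0..<nb} - {p}. A $$ (p,l) * B $$ (l,p))"
    using p by (simp add: sum.remove)
  also have "(\<Sum>l\<in>{0..<nb} - {p}. A $$ (p,l) * B $$ (l,p)) = 0"
  proof (intro sum.neutral ballI)
    fix l assume l: "l \<in> {0..<nb} - {p}"
    show "A $$ (p,l) * B $$ (l,p) = 0"
    proof (cases "l < p")
      case True then show ?thesis using assms l unfolding utz_def by auto
    next
      case False then have "p < l" using l by auto
      then show ?thesis using assms l unfolding utz_def by auto
    qed
  qed
  finally show ?thesis by simp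
qed

lemma utz_one: "utz (1\<^sub>m n)" unfolding utz_def by auto

lemma upper_triangular_utz: "upper_triangular A \<Longrightarrow> utz A"
  unfolding utz_def upper_triangular_def by auto

lemma ut_diag_nonzero:
  fixes A :: "'a::field mat"
  assumes A: "A \<in> carrier_mat m m" and ut: "upper_triangular A" and inv: "invertible_mat A"
    and p: "p < m"
  shows "A $$ (p,p) \<noteq> 0"
proof -
  obtain B where B: "A * B = 1\<^sub>m m" "B * A = 1\<^sub>m (dim_row B)"
    using inv A unfolding invertible_mat_def inverts_mat_def by auto
  have "dim_col B = m" using arg_cong[OF B(1), of dim_col] A by simp
  moreover have "dim_row B = m" using arg_cong[OF B(2), of dim_col] A by simp
  ultimately have Bc: "B \<in> carrier_mat m m" by auto
  have "det A * det B = 1" using det_mult[OF A Bc] B(1) by simp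
  then have "det A \<noteq> 0" by auto
  then have "0 \<notin> set (diag_mat A)" using upper_triangular_imp_det_eq_0_iff[OF A ut] by simp
  then show ?thesis using p A unfolding diag_mat_def by auto
qed

lemma det_nonzero_inv:
  fixes A :: "'a::field mat"
  assumes A: "A \<in> carrier_mat m m" and ut: "upper_triangular A" and inv: "invertible_mat A"
  shows "det A \<noteq> 0"
  using ut_diag_nonzero[OF A ut inv] upper_triangular_imp_det_eq_0_iff[OF A ut] A
  by (auto simp: diag_mat_def)

lemma ker_zero_inv:
  fixes A :: "'a::field mat"
  assumes A: "A \<in> carrier_mat m m" and ut: "upper_triangular A" and inv: "invertible_mat A"
    and y: "y \<in> carrier_vec m" and Ay: "A *\<^sub>v y = 0\<^sub>v m"
  shows "y = 0\<^sub>v m"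
  using det_nonzero_inv[OF A ut inv] det_0_iff_vec_prod_zero_field[OF A] y Ay by auto

lemma mat_inverse_ok:
  fixes A :: "'a::field mat"
  assumes A: "A \<in> carrier_mat m m" and ut: "upper_triangular A" and inv: "invertible_mat A"
  shows "the (mat_inverse A) \<in> carrier_mat m m \<and> A * the (mat_inverse A) = 1\<^sub>m m
     \<and> the (mat_inverse A) * A = 1\<^sub>m m"
proof -
  have "A \<in> Units (ring_mat TYPE('a) m ())"
    using det_non_zero_imp_unit[OF A det_nonzero_inv[OF A ut inv]] .
  then obtain B where "mat_inverse A = Some B" using mat_inverse(1)[OF A] by fastforce
  then show ?thesis using mat_inverse(2)[OF A] by auto
qed

locale pen =
  fixes k :: nat and t :: "nat \<Rightarrow> nat"
    and E :: "nat \<Rightarrow> complex mat" and Ahat :: "nat \<Rightarrow> complex mat"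
  assumes k: "k \<ge> 1"
    and t_pos: "\<forall>i \<in> {1..k}. t i \<ge> 1"
    and t_mono: "\<forall>i \<in> {1..<k}. t i \<ge> t (Suc i)"
    and E_dim: "\<forall>i \<in> {1..k}. E i \<in> carrier_mat (t i) (t i)"
    and E_ut: "\<forall>i \<in> {1..k}. upper_triangular (E i) \<and> invertible_mat (E i)"
    and Ahat_dim: "\<forall>i \<in> {1..<k}. Ahat i \<in> carrier_mat (t (Suc i)) (t (Suc i))"
    and Ahat_ut: "\<forall>i \<in> {1..<k}. upper_triangular (Ahat i) \<and> invertible_mat (Ahat i)"
begin

abbreviation n where "n \<equiv> (\<Sum>i = 1..k. t i)"

definition blk :: "'a vec \<Rightarrow> nat \<Rightarrow> 'a vec" where
  "blk y i = vec (t i) (\<lambda>q. y $ (boff t i + q))"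

lemma blk_carrier[simp]: "blk y i \<in> carrier_vec (t i)" "dim_vec (blk y i) = t i"
  unfolding blk_def by auto

lemma blk_index[simp]: "q < t i \<Longrightarrow> blk y i $ q = y $ (boff t i + q)"
  unfolding blk_def by auto

lemma t_antimono: "1 \<le> i \<Longrightarrow> i \<le> j \<Longrightarrow> j \<le> k \<Longrightarrow> t j \<le> t i"
proof (induction j)
  case 0 then show ?case by simp
next
  case (Suc j)
  show ?case
  proof (cases "i = Suc j")
    case True then show ?thesis by simp
  next
    case False
    then have "t (Suc j) \<le> t j" using t_mono Suc.prems by auto
    then show ?thesis using Suc False by auto
  qed
qed

lemma n_eq: "n = boff t (Suc k)" by (simp add: boff_n)

lemma blk_le: "1 \<le> i \<Longrightarrow> i \<le> k \<Longrightarrow> boff t i + t i \<le> n"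
  using boff_Suc[of i t] boff_mono[of "Suc i" "Suc k" t] n_eq by simp

lemma decomp: "r < n \<Longrightarrow> \<exists>i a. 1 \<le> i \<and> i \<le> k \<and> a < t i \<and> r = boff t i + a"
  using boff_decomp[of r t k] n_eq by simp

lemma A0_carrier[simp]: "A0 t k Ahat \<in> carrier_mat n n"
  unfolding A0_def by auto
lemma E0_carrier[simp]: "E0 t k E \<in> carrier_mat n n"
  unfolding E0_def by auto

lemma Ablk_carrier[simp]: "Ablk t Ahat i \<in> carrier_mat (t i) (t (Suc i))"
  unfolding Ablk_def by auto

lemma Ablk_dims[simp]: "dim_row (Ablk t Ahat i) = t i" "dim_col (Ablk t Ahat i) = t (Suc i)"
  unfolding Ablk_def by auto

lemma A0_row:
  assumes i: "1 \<le> i" "i \<le> k" "a < t i" and c: "c < n"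
  shows "A0 t k Ahat $$ (boff t i + a, c) =
    (if i < k \<and> boff t (Suc i) \<le> c \<and> c < boff t (Suc i) + t (Suc i)
     then Ablk t Ahat i $$ (a, c - boff t (Suc i)) else 0)"
proof -
  have r: "boff t i + a < n" using blk_le[OF i(1,2)] i by simp
  have "A0 t k Ahat $$ (boff t i + a, c) =
     (\<Sum>l = 1..<k. block_entry (boff t l) (boff t (Suc l)) (Ablk t Ahat l) (boff t i + a) c)"
    unfolding A0_def using r c by simp
  also have "\<dots> = (if i \<in> {1..<k} then block_entry (boff t i) (boff t (Suc i)) (Ablk t Ahat i) (boff t i + a) c else 0)"
    by (rule block_sum) (use i in auto)
  finally show ?thesis using i by (auto simp: block_entry_in)
qed

lemma E0_row:
  assumes i: "1 \<le> i" "i \<le> k" "a < t i" and c: "c < n"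
  shows "E0 t k E $$ (boff t i + a, c) =
    (if boff t i \<le> c \<and> c < boff t i + t i then E i $$ (a, c - boff t i) else 0)"
proof -
  have r: "boff t i + a < n" using blk_le[OF i(1,2)] i by simp
  have Ed: "\<And>l. l \<in> {1..k} \<Longrightarrow> dim_row (E l) = t l" "dim_col (E i) = t i" using E_dim i by auto
  have "E0 t k E $$ (boff t i + a, c) =
     (\<Sum>l = 1..k. block_entry (boff t l) (boff t l) (E l) (boff t i + a) c)"
    unfolding E0_def using r c by simp
  also have "\<dots> = (if i \<in> {1..k} then block_entry (boff t i) (boff t i) (E i) (boff t i + a) c else 0)"
    by (rule block_sum) (use i Ed in auto)
  finally show ?thesis using i Ed by (auto simp: block_entry_in)
qed

lemma mult_row_sum:
  assumes "M \<in> carrier_mat n n" "y \<in> carrier_vec n" "r < n"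
  shows "(M *\<^sub>v y) $ r = (\<Sum>c<n. M $$ (r,c) * y $ c)"
  using assms by (simp add: scalar_prod_def atLeast0LessThan)

lemma A0_mult:
  assumes y: "y \<in> carrier_vec n" and i: "1 \<le> i" "i \<le> k" "a < t i"
  shows "(A0 t k Ahat *\<^sub>v y) $ (boff t i + a) =
     (if i < k then (Ablk t Ahat i *\<^sub>v blk y (Suc i)) $ a else 0)"
proof -
  have r: "boff t i + a < n" using blk_le[OF i(1,2)] i by simp
  have "(A0 t k Ahat *\<^sub>v y) $ (boff t i + a) = (\<Sum>c<n. A0 t k Ahat $$ (boff t i + a, c) * y $ c)"
    using mult_row_sum[OF A0_carrier y r] .
  also have "\<dots> = (if i < k then (Ablk t Ahat i *\<^sub>v blk y (Suc i)) $ a else 0)"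
  proof (cases "i < k")
    case True
    have le: "boff t (Suc i) + t (Suc i) \<le> n" using blk_le[of "Suc i"] True by simp
    have "(\<Sum>c<n. A0 t k Ahat $$ (boff t i + a, c) * y $ c)
       = (\<Sum>c<n. (if boff t (Suc i) \<le> c \<and> c < boff t (Suc i) + t (Suc i)
            then Ablk t Ahat i $$ (a, c - boff t (Suc i)) else 0) * y $ c)"
      using A0_row[OF i] True by (intro sum.cong) auto
    also have "\<dots> = (\<Sum>q<t (Suc i). Ablk t Ahat i $$ (a, q) * y $ (boff t (Suc i) + q))"
      by (rule window_sum[OF le])
    also have "\<dots> = (Ablk t Ahat i *\<^sub>v blk y (Suc i)) $ a"
      using i by (simp add: scalar_prod_def atLeast0LessThan)
    finally show ?thesis using True by simp
  next
    case False
    then show ?thesis using A0_row[OF i] by simp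
  qed
  finally show ?thesis .
qed

lemma E0_mult:
  assumes y: "y \<in> carrier_vec n" and i: "1 \<le> i" "i \<le> k" "a < t i"
  shows "(E0 t k E *\<^sub>v y) $ (boff t i + a) = (E i *\<^sub>v blk y i) $ a"
proof -
  have r: "boff t i + a < n" using blk_le[OF i(1,2)] i by simp
  have le: "boff t i + t i \<le> n" using blk_le[OF i(1,2)] .
  have Ei: "E i \<in> carrier_mat (t i) (t i)" using E_dim i by auto
  have "(E0 t k E *\<^sub>v y) $ (boff t i + a) = (\<Sum>c<n. E0 t k E $$ (boff t i + a, c) * y $ c)"
    using mult_row_sum[OF E0_carrier y r] .
  also have "\<dots> = (\<Sum>c<n. (if boff t i \<le> c \<and> c < boff t i + t i
            then E i $$ (a, c - boff t i) else 0) * y $ c)"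
    using E0_row[OF i] by (intro sum.cong) auto
  also have "\<dots> = (\<Sum>q<t i. E i $$ (a, q) * y $ (boff t i + q))"
    by (rule window_sum[OF le])
  also have "\<dots> = (E i *\<^sub>v blk y i) $ a"
    using i Ei by (simp add: scalar_prod_def atLeast0LessThan)
  finally show ?thesis .
qed

end

context pen begin

abbreviation Z where "Z i \<equiv> Zhat t E Ahat i"
abbreviation Zp where "Zp l j \<equiv> Zprod t E Ahat l j"
abbreviation Ab where "Ab i \<equiv> Ablk t Ahat i"

lemma E_c: "1 \<le> i \<Longrightarrow> i \<le> k \<Longrightarrow> E i \<in> carrier_mat (t i) (t i)" using E_dim by auto
lemma E_u: "1 \<le> i \<Longrightarrow> i \<le> k \<Longrightarrow> upper_triangular (E i)" using E_ut by auto
lemma E_i: "1 \<le> i \<Longrightarrow> i \<le> k \<Longrightarrow> invertible_mat (E i)" using E_ut by auto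
lemma A_c: "1 \<le> i \<Longrightarrow> i < k \<Longrightarrow> Ahat i \<in> carrier_mat (t (Suc i)) (t (Suc i))" using Ahat_dim by auto
lemma A_u: "1 \<le> i \<Longrightarrow> i < k \<Longrightarrow> upper_triangular (Ahat i)" using Ahat_ut by auto
lemma A_i: "1 \<le> i \<Longrightarrow> i < k \<Longrightarrow> invertible_mat (Ahat i)" using Ahat_ut by auto

lemma E_diag: "1 \<le> i \<Longrightarrow> i \<le> k \<Longrightarrow> p < t i \<Longrightarrow> E i $$ (p,p) \<noteq> 0"
  using ut_diag_nonzero[OF E_c E_u E_i] by auto

lemma Einv:
  assumes "1 \<le> i" "i \<le> k"
  shows "the (mat_inverse (E i)) \<in> carrier_mat (t i) (t i) \<and> E i * the (mat_inverse (E i)) = 1\<^sub>m (t i)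
     \<and> the (mat_inverse (E i)) * E i = 1\<^sub>m (t i)"
  using mat_inverse_ok[OF E_c[OF assms] E_u[OF assms] E_i[OF assms]] .

lemma Z_c: "1 \<le> i \<Longrightarrow> i < k \<Longrightarrow> Z i \<in> carrier_mat (t i) (t (Suc i))"
  unfolding Zhat_def using Einv[of i] by auto

lemma EZ: assumes "1 \<le> i" "i < k" shows "E i * Z i = - Ab i"
proof -
  note I = Einv[of i] assms
  have "E i * Z i = - (E i * (the (mat_inverse (E i)) * Ab i))"
    unfolding Zhat_def using I E_c[of i] by (subst uminus_mult_right_mat) auto
  also have "E i * (the (mat_inverse (E i)) * Ab i) = (E i * the (mat_inverse (E i))) * Ab i"
    using I E_c[of i] by (intro assoc_mult_mat[symmetric]) auto
  also have "\<dots> = Ab i" using I by simp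
  finally show ?thesis .
qed

lemma Z_solve:
  assumes i: "1 \<le> i" "i < k" and x: "x \<in> carrier_vec (t i)" and y: "y \<in> carrier_vec (t (Suc i))"
    and eq: "E i *\<^sub>v x + Ab i *\<^sub>v y = 0\<^sub>v (t i)"
  shows "x = Z i *\<^sub>v y"
proof -
  define F where "F = the (mat_inverse (E i))"
  have F: "F \<in> carrier_mat (t i) (t i)" "F * E i = 1\<^sub>m (t i)" using Einv[of i] i unfolding F_def by auto
  have Ec: "E i \<in> carrier_mat (t i) (t i)" using E_c i by auto
  have Ex: "E i *\<^sub>v x = - (Ab i *\<^sub>v y)"
  proof (rule eq_vecI)
    fix a assume a: "a < dim_vec (- (Ab i *\<^sub>v y))"
    have "(E i *\<^sub>v x)$a + (Ab i *\<^sub>v y)$a = 0" using arg_cong[OF eq, of "\<lambda>v. v $ a"] a Ec x by simp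
    then show "(E i *\<^sub>v x) $ a = (- (Ab i *\<^sub>v y)) $ a" using a by (simp add: eq_neg_iff_add_eq_0)
  qed (use Ec in simp)
  have "x = (F * E i) *\<^sub>v x" by (subst F(2)) (use x in simp)
  also have "\<dots> = F *\<^sub>v (E i *\<^sub>v x)" using assoc_mult_mat_vec[OF F(1) Ec x] .
  also have "\<dots> = F *\<^sub>v (- (Ab i *\<^sub>v y))" by (simp only: Ex)
  also have "\<dots> = - (F *\<^sub>v (Ab i *\<^sub>v y))" using F y by (intro eq_vecI) auto
  also have "\<dots> = - ((F * Ab i) *\<^sub>v y)" using assoc_mult_mat_vec[OF F(1) Ablk_carrier y] by simp
  also have "\<dots> = Z i *\<^sub>v y" unfolding Zhat_def F_def[symmetric] using F y by (intro eq_vecI) auto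
  finally show ?thesis .
qed

lemma Ab_entry: "a < t i \<Longrightarrow> b < t (Suc i) \<Longrightarrow> Ab i $$ (a,b) = (if a < t (Suc i) then Ahat i $$ (a,b) else 0)"
  unfolding Ablk_def by auto

lemma Ab_utz: assumes "1 \<le> i" "i < k" shows "utz (Ab i)"
  unfolding utz_def using A_u[OF assms] A_c[OF assms] by (auto simp: Ab_entry upper_triangular_def)

lemma Z_utz: assumes i: "1 \<le> i" "i < k" shows "utz (Z i)"
  unfolding utz_def
proof (intro allI impI)
  fix a b assume ab: "a < dim_row (Z i)" "b < dim_col (Z i)" "b < a"
  have Zc: "Z i \<in> carrier_mat (t i) (t (Suc i))" using Z_c i by auto
  have Ec: "E i \<in> carrier_mat (t i) (t i)" using E_c i by auto
  have yc: "col (Z i) b \<in> carrier_vec (t i)" using Zc ab by auto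
  have zf: "(E i *\<^sub>v col (Z i) b) $ a' = 0" if a': "Suc b \<le> a'" "a' < t i" for a'
  proof -
    have "(E i *\<^sub>v col (Z i) b) $ a' = (E i * Z i) $$ (a', b)" using Ec Zc a' ab by simp
    also have "\<dots> = - Ab i $$ (a', b)" using EZ[OF i] a' ab Zc by simp
    also have "\<dots> = 0" using Ab_utz[OF i] a' ab Zc unfolding utz_def by simp
    finally show "(E i *\<^sub>v col (Z i) b) $ a' = 0" .
  qed
  have "col (Z i) b $ a = 0"
    using back_subst[OF Ec upper_triangular_utz[OF E_u] E_diag yc zf] i ab Zc by auto
  then show "Z i $$ (a, b) = 0" using ab by simp
qed

lemma Z_diag: assumes i: "1 \<le> i" "i < k" and p: "p < t (Suc i)" shows "Z i $$ (p,p) \<noteq> 0"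
proof -
  have Zc: "Z i \<in> carrier_mat (t i) (t (Suc i))" using Z_c i by auto
  have Ec: "E i \<in> carrier_mat (t i) (t i)" using E_c i by auto
  have "t (Suc i) \<le> t i" using t_mono i by auto
  then have pi: "p < t i" using p by linarith
  have "E i $$ (p,p) * Z i $$ (p,p) = (E i * Z i) $$ (p,p)"
    using utz_mult_diag[OF Ec Zc upper_triangular_utz[OF E_u] Z_utz[OF i]] i p pi by simp
  also have "\<dots> = - Ahat i $$ (p,p)" using EZ[OF i] p pi Zc by (simp add: Ab_entry)
  also have "\<dots> \<noteq> 0" using ut_diag_nonzero[OF A_c A_u A_i] i p by simp
  finally show ?thesis by auto
qed

lemma Zp_rec: "l < j \<Longrightarrow> Zp l j = Z l * Zp (Suc l) j"
  unfolding Zprod_def by (simp add: upt_conv_Cons)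

lemma Zp_same: "Zp j j = 1\<^sub>m (t j)"
  unfolding Zprod_def by simp

lemma Zp_props:
  assumes "1 \<le> l" "l \<le> j" "j \<le> k"
  shows "Zp l j \<in> carrier_mat (t l) (t j) \<and> utz (Zp l j) \<and> (\<forall>p < t j. Zp l j $$ (p,p) \<noteq> 0)"
  using assms
proof (induction "j - l" arbitrary: l)
  case 0
  then have "l = j" by simp
  then show ?case by (simp add: Zp_same utz_one)
next
  case (Suc d)
  then have lj: "l < j" "Suc l \<le> j" "1 \<le> Suc l" "l < k" by auto
  have IH: "Zp (Suc l) j \<in> carrier_mat (t (Suc l)) (t j) \<and> utz (Zp (Suc l) j) \<and> (\<forall>p < t j. Zp (Suc l) j $$ (p,p) \<noteq> 0)"
    using Suc lj by (intro Suc.hyps) auto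
  have Zc: "Z l \<in> carrier_mat (t l) (t (Suc l))" using Z_c Suc lj by auto
  have tt: "t j \<le> t (Suc l)" using t_antimono[of "Suc l" j] lj Suc by auto
  have c: "Zp l j \<in> carrier_mat (t l) (t j)" using Zp_rec[OF lj(1)] Zc IH by auto
  have Zu: "utz (Z l)" using Z_utz lj Suc by auto
  moreover have "utz (Zp l j)" unfolding Zp_rec[OF lj(1)]
    using utz_mult[OF Zc IH[THEN conjunct1] Zu IH[THEN conjunct2, THEN conjunct1]] .
  moreover have "\<forall>p < t j. Zp l j $$ (p,p) \<noteq> 0"
  proof (intro allI impI)
    fix p assume p: "p < t j"
    have "t (Suc l) \<le> t l" using t_mono lj Suc by auto
    then have pl: "p < t l" "p < t (Suc l)" using tt p by linarith+
    have "Zp l j $$ (p,p) = Z l $$ (p,p) * Zp (Suc l) j $$ (p,p)"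
      unfolding Zp_rec[OF lj(1)]
      using utz_mult_diag[OF Zc IH[THEN conjunct1] Zu IH[THEN conjunct2, THEN conjunct1]] p pl by auto
    then show "Zp l j $$ (p,p) \<noteq> 0" using Z_diag[of l p] IH Suc lj p pl by auto
  qed
  ultimately show ?case using c by blast
qed

end

definition cv :: "complex poly vec \<Rightarrow> nat \<Rightarrow> complex vec" where
  "cv x s = vec (dim_vec x) (\<lambda>c. coeff (x $ c) s)"

lemma cv_carrier[simp]: "x \<in> carrier_vec m \<Longrightarrow> cv x s \<in> carrier_vec m"
  unfolding cv_def by auto
lemma cv_index[simp]: "c < dim_vec x \<Longrightarrow> cv x s $ c = coeff (x $ c) s"
  unfolding cv_def by auto
lemma cv_dim[simp]: "dim_vec (cv x s) = dim_vec x" unfolding cv_def by auto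

lemma eval0_cv: "eval_vec x 0 = cv x 0"
  unfolding eval_vec_def cv_def by (intro eq_vecI) (auto simp: poly_0_coeff_0)

lemma pencil_dims[simp]: "dim_row (pencil A E) = dim_row A" "dim_col (pencil A E) = dim_col A"
  unfolding pencil_def by auto

lemma coeff_lin: "coeff ([:a, e:] * p) s = a * coeff p s + (if s = 0 then 0 else e * coeff p (s - 1))"
  by (cases s) auto

lemma pencil_coeff:
  assumes A: "A \<in> carrier_mat m m" and E: "E \<in> carrier_mat m m" and x: "x \<in> carrier_vec m"
    and r: "r < m"
  shows "coeff ((pencil A E *\<^sub>v x) $ r) s =
     (A *\<^sub>v cv x s) $ r + (if s = 0 then 0 else (E *\<^sub>v cv x (s - 1)) $ r)"
proof -
  have "(pencil A E *\<^sub>v x) $ r = (\<Sum>c\<in>{0..<m}. [:A $$ (r,c), E $$ (r,c):] * x $ c)"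
    using A x r by (simp add: scalar_prod_def pencil_def)
  then have "coeff ((pencil A E *\<^sub>v x) $ r) s
     = (\<Sum>c\<in>{0..<m}. A $$ (r,c) * coeff (x $ c) s + (if s = 0 then 0 else E $$ (r,c) * coeff (x $ c) (s - 1)))"
    by (simp only: coeff_sum coeff_lin)
  also have "\<dots> = (\<Sum>c\<in>{0..<m}. A $$ (r,c) * coeff (x $ c) s) +
      (if s = 0 then 0 else (\<Sum>c\<in>{0..<m}. E $$ (r,c) * coeff (x $ c) (s - 1)))"
    by (simp add: sum.distrib)
  also have "\<dots> = (A *\<^sub>v cv x s) $ r + (if s = 0 then 0 else (E *\<^sub>v cv x (s - 1)) $ r)"
    using A E x r by (simp add: scalar_prod_def)
  finally show ?thesis .
qed

context pen begin

lemma A0_dims[simp]: "dim_row (A0 t k Ahat) = n" "dim_col (A0 t k Ahat) = n"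
  unfolding A0_def by auto
lemma E0_dims[simp]: "dim_row (E0 t k E) = n" "dim_col (E0 t k E) = n"
  unfolding E0_def by auto

abbreviation P where "P \<equiv> pencil (A0 t k Ahat) (E0 t k E)"

lemma P_dims[simp]: "dim_row P = n" "dim_col P = n" by auto

lemma A0_lower: assumes r: "r < n" and c: "c < n" "c \<le> r" shows "A0 t k Ahat $$ (r,c) = 0"
proof -
  obtain i a where ia: "1 \<le> i" "i \<le> k" "a < t i" "r = boff t i + a" using decomp[OF r] by blast
  have "boff t (Suc i) = boff t i + t i" using boff_Suc ia by simp
  then show ?thesis using A0_row[OF ia(1-3) c(1)] ia c by auto
qed

lemma E0_lower: assumes r: "r < n" and c: "c < r" shows "E0 t k E $$ (r,c) = 0"
proof -
  obtain i a where ia: "1 \<le> i" "i \<le> k" "a < t i" "r = boff t i + a" using decomp[OF r] by blast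
  have "upper_triangular (E i)" "E i \<in> carrier_mat (t i) (t i)" using E_u E_c ia by auto
  then show ?thesis using E0_row[OF ia(1-3)] ia c r by (auto simp: upper_triangular_def)
qed

lemma E0_diag: assumes r: "r < n" shows "E0 t k E $$ (r,r) \<noteq> 0"
proof -
  obtain i a where ia: "1 \<le> i" "i \<le> k" "a < t i" "r = boff t i + a" using decomp[OF r] by blast
  then show ?thesis using E0_row[OF ia(1-3)] E_diag[of i a] ia r by auto
qed

lemma n_pos: "n > 0"
proof -
  have "t 1 \<le> n" using k by (intro member_le_sum) auto
  moreover have "1 \<le> t 1" using t_pos k by auto
  ultimately show ?thesis by linarith
qed

lemma fract_det: "det (fract_mat P) \<noteq> 0"
proof -
  have c: "fract_mat P \<in> carrier_mat n n" unfolding fract_mat_def pencil_def by auto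
  have ut: "upper_triangular (fract_mat P)"
    unfolding fract_mat_def pencil_def
    by (intro upper_triangularI) (auto simp: A0_lower E0_lower)
  have "0 \<notin> set (diag_mat (fract_mat P))"
    using E0_diag A0_lower unfolding diag_mat_def fract_mat_def pencil_def by auto
  then show ?thesis using upper_triangular_imp_det_eq_0_iff[OF c ut] by simp
qed

lemma fract_ker: "v \<in> carrier_vec n \<Longrightarrow> fract_mat P *\<^sub>v v = 0\<^sub>v n \<Longrightarrow> v = 0\<^sub>v n"
proof -
  have c: "fract_mat P \<in> carrier_mat n n" unfolding fract_mat_def pencil_def by auto
  show "v \<in> carrier_vec n \<Longrightarrow> fract_mat P *\<^sub>v v = 0\<^sub>v n \<Longrightarrow> v = 0\<^sub>v n"
    using det_0_iff_vec_prod_zero_field[OF c] fract_det by auto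
qed

lemma rank_rat_P: "rank_rat P = n"
proof -
  have c: "fract_mat P \<in> carrier_mat n n" unfolding fract_mat_def pencil_def by auto
  show ?thesis unfolding rank_rat_def using vec_space.det_rank_iff[OF c] fract_det by simp
qed

lemma eval_rank: "rank_C (eval_mat P \<mu>) < n \<longleftrightarrow> \<mu> = 0"
proof -
  have c: "eval_mat P \<mu> \<in> carrier_mat n n" unfolding eval_mat_def pencil_def by auto
  have ut: "upper_triangular (eval_mat P \<mu>)"
    unfolding eval_mat_def pencil_def
    by (intro upper_triangularI) (auto simp: A0_lower E0_lower)
  have dg: "\<And>r. r < n \<Longrightarrow> eval_mat P \<mu> $$ (r,r) = \<mu> * E0 t k E $$ (r,r)"
    unfolding eval_mat_def pencil_def by (auto simp: A0_lower)
  have "det (eval_mat P \<mu>) = 0 \<longleftrightarrow> \<mu> = 0"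
    unfolding upper_triangular_imp_det_eq_0_iff[OF c ut]
    using dg E0_diag n_pos c unfolding diag_mat_def by (auto simp: in_set_conv_nth)
  moreover have "rank_C (eval_mat P \<mu>) = vec_space.rank n (eval_mat P \<mu>)"
    unfolding rank_C_def using c by simp
  ultimately show ?thesis
    using vec_space.det_rank_iff[OF c] vec_space.rank_le_nc[OF c] by (auto simp: order_less_le)
qed

lemma eig: "is_eigenvalue P \<mu> \<longleftrightarrow> \<mu> = 0"
  unfolding is_eigenvalue_def rank_rat_P using eval_rank .

lemma min_basis_empty:
  assumes "is_right_minimal_basis P N" shows "N = []"
proof (rule ccontr)
  assume "N \<noteq> []"
  then obtain x N' where N: "N = x # N'" by (cases N) auto
  have nb: "is_poly_null_basis P N" using assms unfolding is_right_minimal_basis_def by auto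
  have xz: "fract_vec y = 0\<^sub>v n" if "y \<in> set N" for y
    using nb that fract_ker unfolding is_poly_null_basis_def right_null_space_def by auto
  define M where "M = mat_of_cols n (map fract_vec N)"
  have Mc: "M \<in> carrier_mat n (length N)" unfolding M_def by (metis mat_of_cols_carrier(1) length_map)
  have rk: "vec_space.rank n M = length N" using nb unfolding is_poly_null_basis_def M_def by simp
  define v :: "complex poly fract vec" where "v = unit_vec (length N) 0"
  have "M *\<^sub>v v = 0\<^sub>v n"
  proof (rule eq_vecI)
    fix i assume i: "i < dim_vec (0\<^sub>v n :: complex poly fract vec)"
    have "(M *\<^sub>v v) $ i = (\<Sum>j\<in>{0..<length N}. M $$ (i,j) * v $ j)"
      using Mc i by (simp add: scalar_prod_def v_def)
    also have "\<dots> = (\<Sum>j\<in>{0..<length N}. if j = 0 then M $$ (i,j) else 0)"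
      using N by (intro sum.cong) (auto simp: v_def)
    also have "\<dots> = M $$ (i, 0)" using N by (simp add: sum.delta)
    also have "\<dots> = fract_vec x $ i" using i N unfolding M_def by (simp add: mat_of_cols_def)
    also have "\<dots> = 0" using xz[of x] N i by simp
    finally show "(M *\<^sub>v v) $ i = 0\<^sub>v n $ i" using i by simp
  qed (use Mc in simp)
  then have "v = 0\<^sub>v (length N)" using vec_space.ker_if_rank_full[OF Mc rk] unfolding v_def by simp
  then show False using N unfolding v_def by (metis length_greater_0_conv list.distinct(1) unit_vec_nonzero)
qed

end

lemma coeff_xpow_mult: fixes q :: "'a::comm_ring_1 poly" shows "coeff ([:0, 1:] ^ j * q) s = (if s < j then 0 else coeff q (s - j))"
proof -
  have "[:0, 1:] ^ j = (monom 1 j :: 'a::comm_ring_1 poly)" using monom_altdef[of "1::'a" j] by simp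
  then show ?thesis by (simp add: coeff_monom_mult)
qed

lemma mult_col_index:
  assumes "A \<in> carrier_mat m1 m2" "B \<in> carrier_mat m2 m3" "a < m1" "p < m3"
  shows "(A *\<^sub>v col B p) $ a = (A * B) $$ (a, p)"
  using assms by simp

context pen begin

abbreviation Xm where "Xm j \<equiv> Xmat t k E Ahat j"

lemma Xm_dims[simp]: "dim_row (Xm j) = n" "dim_col (Xm j) = t j"
  unfolding Xmat_def by auto

lemma Xm_entry:
  assumes j: "1 \<le> j" "j \<le> k" and p: "p < t j" and i: "1 \<le> i" "i \<le> k" "a < t i"
  shows "Xm j $$ (boff t i + a, p) = (if i \<le> j then monom (Zp i j $$ (a,p)) (i - 1) else 0)"
proof -
  have r: "boff t i + a < n" using blk_le[OF i(1,2)] i by simp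
  have Zc: "\<And>l. l \<in> {1..j} \<Longrightarrow> Zp l j \<in> carrier_mat (t l) (t j)" using Zp_props j by auto
  have "Xm j $$ (boff t i + a, p) = (\<Sum>l = 1..j. block_entry (boff t l) 0
                  (map_mat (\<lambda>a. monom a (l - 1)) (Zp l j)) (boff t i + a) p)"
    unfolding Xmat_def using r p by simp
  also have "\<dots> = (if i \<in> {1..j} then block_entry (boff t i) 0
                  (map_mat (\<lambda>a. monom a (i - 1)) (Zp i j)) (boff t i + a) p else 0)"
    by (rule block_sum) (use i Zc in auto)
  also have "\<dots> = (if i \<le> j then monom (Zp i j $$ (a,p)) (i - 1) else 0)"
    using i Zc[of i] p by (auto simp: block_entry_in)
  finally show ?thesis .
qed

lemma blk_cvX:
  assumes j: "1 \<le> j" "j \<le> k" and p: "p < t j" and i: "1 \<le> i" "i \<le> k"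
  shows "blk (cv (col (Xm j) p) s) i = (if i \<le> j \<and> Suc s = i then col (Zp i j) p else 0\<^sub>v (t i))"
proof (rule eq_vecI)
  fix a assume "a < dim_vec (if i \<le> j \<and> Suc s = i then col (Zp i j) p else 0\<^sub>v (t i))"
  then have a: "a < t i" using Zp_props[of i j] j i by (auto split: if_splits)
  have r: "boff t i + a < n" using blk_le[OF i(1,2)] a by simp
  have "blk (cv (col (Xm j) p) s) i $ a = coeff (Xm j $$ (boff t i + a, p)) s"
    using a r p by simp
  also have "\<dots> = (if i \<le> j \<and> Suc s = i then Zp i j $$ (a,p) else 0)"
    using Xm_entry[OF j p i a] i by auto
  also have "\<dots> = (if i \<le> j \<and> Suc s = i then col (Zp i j) p else 0\<^sub>v (t i)) $ a"
    using Zp_props[of i j] j i a p by auto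
  finally show "blk (cv (col (Xm j) p) s) i $ a = (if i \<le> j \<and> Suc s = i then col (Zp i j) p else 0\<^sub>v (t i)) $ a" .
qed (use Zp_props[of i j] j i in auto)

lemma Xcol_carrier: "col (Xm j) p \<in> carrier_vec n" unfolding carrier_vec_def by simp

lemma Xcol_eval_entry:
  assumes j: "1 \<le> j" "j \<le> k" and p: "p < t j" and r: "r < t 1"
  shows "eval_vec (col (Xm j) p) 0 $ r = Zp 1 j $$ (r, p)"
proof -
  have r': "boff t 1 + r < n" using blk_le[of 1] k r by simp
  have "eval_vec (col (Xm j) p) 0 $ r = coeff (Xm j $$ (boff t 1 + r, p)) 0"
    unfolding eval0_cv using r' p by simp
  then show ?thesis using Xm_entry[OF j p _ k r] j by simp
qed

lemma Xcol_eval_high: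
  assumes j: "1 \<le> j" "j \<le> k" and p: "p < t j" and r: "t 1 \<le> r" "r < n"
  shows "eval_vec (col (Xm j) p) 0 $ r = 0"
proof -
  obtain i a where ia: "1 \<le> i" "i \<le> k" "a < t i" "r = boff t i + a" using decomp[OF r(2)] by blast
  have "i \<noteq> 1" using ia r by auto
  have "eval_vec (col (Xm j) p) 0 $ r = coeff (Xm j $$ (boff t i + a, p)) 0"
    unfolding eval0_cv using r p ia by simp
  then show ?thesis using Xm_entry[OF j p ia(1-3)] \<open>i \<noteq> 1\<close> ia by simp
qed

lemma Xcol_zero_dir:
  assumes j: "1 \<le> j" "j \<le> k" and p: "p < t j"
  shows "zero_direction P 0 (col (Xm j) p) j"
proof -
  define x where "x = col (Xm j) p"
  have xc: "x \<in> carrier_vec n" unfolding x_def by (rule Xcol_carrier)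
  have tj: "t j \<le> t 1" using t_antimono[of 1 j] j by simp
  have Zc: "\<And>l. 1 \<le> l \<Longrightarrow> l \<le> j \<Longrightarrow> Zp l j \<in> carrier_mat (t l) (t j)" using Zp_props j by auto
  define w :: "complex poly vec" where
    "w = vec n (\<lambda>r. [: if boff t j \<le> r \<and> r < boff t j + t j then E j $$ (r - boff t j, p) else 0 :])"
  have wc: "w \<in> carrier_vec n" unfolding w_def by simp
  have ev_x: "eval_vec x 0 \<noteq> 0\<^sub>v n"
  proof
    assume "eval_vec x 0 = 0\<^sub>v n"
    then have "eval_vec x 0 $ p = 0" using p tj n_pos blk_le[of 1] k by (auto simp: eval_vec_def x_def)
    moreover have "eval_vec x 0 $ p = Zp 1 j $$ (p, p)" unfolding x_def
      using Xcol_eval_entry[OF j p] p tj by simp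
    ultimately show False using Zp_props[of 1 j] j p by auto
  qed
  have ev_w: "eval_vec w 0 \<noteq> 0\<^sub>v n"
  proof
    assume "eval_vec w 0 = 0\<^sub>v n"
    moreover have "boff t j + p < n" using blk_le[OF j] p by simp
    ultimately have "eval_vec w 0 $ (boff t j + p) = 0" by simp
    moreover have "eval_vec w 0 $ (boff t j + p) = E j $$ (p, p)"
      using \<open>boff t j + p < n\<close> p unfolding eval_vec_def w_def by simp
    ultimately show False using E_diag[OF j p] by simp
  qed
  have eq: "P *\<^sub>v x = ([:-0, 1:] ^ j) \<cdot>\<^sub>v w"
  proof (rule eq_vecI)
    fix r assume "r < dim_vec ([:-0, 1:] ^ j \<cdot>\<^sub>v w)"
    then have r: "r < n" using wc by simp
    obtain i a where ia: "1 \<le> i" "i \<le> k" "a < t i" "r = boff t i + a" using decomp[OF r] by blast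
    show "(P *\<^sub>v x) $ r = ([:-0, 1:] ^ j \<cdot>\<^sub>v w) $ r"
    proof (rule poly_eqI)
      fix s
      have rhs: "coeff (([:-0, 1:] ^ j \<cdot>\<^sub>v w) $ r) s =
          (if s = j \<and> i = j then E j $$ (a, p) else 0)"
      proof -
        have "coeff (([:-0, 1:] ^ j \<cdot>\<^sub>v w) $ r) s = coeff ([:0, 1:] ^ j * w $ r) s"
          using r wc by simp
        also have "\<dots> = (if s < j then 0 else coeff (w $ r) (s - j))" by (rule coeff_xpow_mult)
        also have "\<dots> = (if s = j \<and> boff t j \<le> r \<and> r < boff t j + t j then E j $$ (r - boff t j, p) else 0)"
          using r unfolding w_def by (auto simp: coeff_pCons')
        also have "\<dots> = (if s = j \<and> i = j then E j $$ (a, p) else 0)"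
          using boff_unique[of j i a t] ia j by auto
        finally show ?thesis .
      qed
      have lhs0: "coeff ((P *\<^sub>v x) $ r) s =
         (A0 t k Ahat *\<^sub>v cv x s) $ r + (if s = 0 then 0 else (E0 t k E *\<^sub>v cv x (s - 1)) $ r)"
        using pencil_coeff[OF A0_carrier E0_carrier xc r] .
      also have "\<dots> = (if i < k then (Ab i *\<^sub>v blk (cv x s) (Suc i)) $ a else 0)
          + (if s = 0 then 0 else (E i *\<^sub>v blk (cv x (s - 1)) i) $ a)"
        using A0_mult[OF cv_carrier[OF xc] ia(1-3)] E0_mult[OF cv_carrier[OF xc] ia(1-3)] ia by simp
      also have "\<dots> = (if s = j \<and> i = j then E j $$ (a, p) else 0)"
      proof -
        have b1: "i < k \<Longrightarrow> blk (cv x s) (Suc i) = (if Suc i \<le> j \<and> s = i then col (Zp (Suc i) j) p else 0\<^sub>v (t (Suc i)))"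
          unfolding x_def using blk_cvX[OF j p, of "Suc i" s] ia by auto
        have b2: "s \<noteq> 0 \<Longrightarrow> blk (cv x (s - 1)) i = (if i \<le> j \<and> s = i then col (Zp i j) p else 0\<^sub>v (t i))"
          unfolding x_def using blk_cvX[OF j p ia(1,2), of "s - 1"] ia by auto
        have Ec: "E i \<in> carrier_mat (t i) (t i)" using E_c ia by auto
        consider "s \<noteq> i" | "s = i" "i < j" | "s = i" "i = j" | "s = i" "j < i" by linarith
        then show ?thesis
        proof cases
          case 1
          then show ?thesis using b1 b2 ia Ec by auto
        next
          case 2
          then have ik: "i < k" using j by simp
          have Zc1: "Zp (Suc i) j \<in> carrier_mat (t (Suc i)) (t j)" using Zc[of "Suc i"] 2 by simp
          have Zic: "Z i \<in> carrier_mat (t i) (t (Suc i))" using Z_c ia ik by simp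
          have "(E i *\<^sub>v col (Zp i j) p) $ a = (E i * Zp i j) $$ (a, p)"
            using Ec Zc[of i] ia 2 p by simp
          also have "E i * Zp i j = (E i * Z i) * Zp (Suc i) j"
            unfolding Zp_rec[OF 2(2)] using Ec Zic Zc1 by (simp add: assoc_mult_mat)
          also have "\<dots> = - (Ab i * Zp (Suc i) j)" unfolding EZ[OF ia(1) ik] using Zc1 by simp
          finally have e2: "(E i *\<^sub>v col (Zp i j) p) $ a = - ((Ab i * Zp (Suc i) j) $$ (a, p))"
            using Zc1 ia p by simp
          have e1: "(Ab i *\<^sub>v col (Zp (Suc i) j) p) $ a = (Ab i * Zp (Suc i) j) $$ (a, p)"
            using Zc1 ia p by simp
          show ?thesis using b1 b2 2 ik e1 e2 ia by auto
        next
          case 3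
          have "(E i *\<^sub>v col (Zp i j) p) $ a = E j $$ (a, p)"
            using 3 Ec ia p by (simp add: Zp_same)
          then show ?thesis using b1 b2 3 ia by auto
        next
          case 4
          then show ?thesis using b1 b2 ia Ec by auto
        qed
      qed
      finally show "coeff ((P *\<^sub>v x) $ r) s = coeff (([:-0, 1:] ^ j \<cdot>\<^sub>v w) $ r) s"
        using rhs by simp
    qed
  qed (use xc wc in simp)
  show ?thesis unfolding zero_direction_def
    using j xc ev_x eq wc ev_w unfolding x_def[symmetric] by auto
qed

end

context pen begin

lemma Ab_ker:
  assumes i: "1 \<le> i" "i < k" and y: "y \<in> carrier_vec (t (Suc i))" and z: "Ab i *\<^sub>v y = 0\<^sub>v (t i)"
  shows "y = 0\<^sub>v (t (Suc i))"
proof -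
  have Ac: "Ahat i \<in> carrier_mat (t (Suc i)) (t (Suc i))" using A_c i by auto
  have tt: "t (Suc i) \<le> t i" using t_mono i by auto
  have "Ahat i *\<^sub>v y = 0\<^sub>v (t (Suc i))"
  proof (rule eq_vecI)
    fix a assume a: "a < dim_vec (0\<^sub>v (t (Suc i)) :: complex vec)"
    then have a': "a < t (Suc i)" "a < t i" using tt by auto
    have "(Ahat i *\<^sub>v y) $ a = (\<Sum>q\<in>{0..<t (Suc i)}. Ahat i $$ (a,q) * y $ q)"
      using Ac y a' by (simp add: scalar_prod_def)
    also have "\<dots> = (\<Sum>q\<in>{0..<t (Suc i)}. Ab i $$ (a,q) * y $ q)"
      using a' by (intro sum.cong) (auto simp: Ab_entry)
    also have "\<dots> = (Ab i *\<^sub>v y) $ a" using y a' by (simp add: scalar_prod_def)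
    also have "\<dots> = 0" using z a' by simp
    finally show "(Ahat i *\<^sub>v y) $ a = 0\<^sub>v (t (Suc i)) $ a" using a by simp
  qed (use Ac in simp)
  then show ?thesis using ker_zero_inv[OF Ac A_u A_i y] i by auto
qed

lemma root_analysis:
  assumes x: "x \<in> carrier_vec n" and w: "w \<in> carrier_vec n" and m: "1 \<le> m"
    and eq: "P *\<^sub>v x = ([:-0, 1:] ^ m) \<cdot>\<^sub>v w"
  shows "(\<forall>r. t 1 \<le> r \<longrightarrow> r < n \<longrightarrow> eval_vec x 0 $ r = 0)
       \<and> (m \<le> k \<longrightarrow> (\<forall>r. t m \<le> r \<longrightarrow> r < n \<longrightarrow> eval_vec x 0 $ r = 0))
       \<and> (k < m \<longrightarrow> eval_vec x 0 = 0\<^sub>v n)"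
proof -
  define Y where "Y s i = blk (cv x s) i" for s i
  have Yc: "\<And>s i. Y s i \<in> carrier_vec (t i)" unfolding Y_def by simp
  have Yd: "\<And>s i. dim_vec (Y s i) = t i" unfolding Y_def by simp
  have eqn: "(if i < k then (Ab i *\<^sub>v Y s (Suc i)) $ a else 0)
      + (if s = 0 then 0 else (E i *\<^sub>v Y (s - 1) i) $ a) = 0"
    if s: "s < m" and i: "1 \<le> i" "i \<le> k" "a < t i" for s i a
  proof -
    have r: "boff t i + a < n" using blk_le[OF i(1,2)] i by simp
    have "coeff ((P *\<^sub>v x) $ (boff t i + a)) s = 0"
      unfolding eq using r w s by (simp add: coeff_xpow_mult)
    then have "(A0 t k Ahat *\<^sub>v cv x s) $ (boff t i + a) + (if s = 0 then 0 else (E0 t k E *\<^sub>v cv x (s - 1)) $ (boff t i + a)) = 0"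
      unfolding pencil_coeff[OF A0_carrier E0_carrier x r] .
    then show ?thesis
      unfolding Y_def A0_mult[OF cv_carrier[OF x] i] E0_mult[OF cv_carrier[OF x] i] .
  qed
  have c1: "Y 0 (Suc i) = 0\<^sub>v (t (Suc i))" if i: "1 \<le> i" "i < k" for i
  proof (rule Ab_ker[OF i Yc])
    show "Ab i *\<^sub>v Y 0 (Suc i) = 0\<^sub>v (t i)"
    proof (rule eq_vecI)
      fix a assume "a < dim_vec (0\<^sub>v (t i) :: complex vec)"
      then have a: "a < t i" by simp
      show "(Ab i *\<^sub>v Y 0 (Suc i)) $ a = 0\<^sub>v (t i) $ a" using eqn[of 0 i a] m i a by simp
    qed simp
  qed
  have c2: "Y (s - 1) i = Z i *\<^sub>v Y s (Suc i)" if s: "1 \<le> s" "s < m" and i: "1 \<le> i" "i < k" for s i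
  proof (rule Z_solve[OF i Yc Yc])
    have Ec: "E i \<in> carrier_mat (t i) (t i)" using E_c i by auto
    show "E i *\<^sub>v Y (s - 1) i + Ab i *\<^sub>v Y s (Suc i) = 0\<^sub>v (t i)"
    proof (rule eq_vecI)
      fix a assume "a < dim_vec (0\<^sub>v (t i) :: complex vec)"
      then have a: "a < t i" by simp
      show "(E i *\<^sub>v Y (s - 1) i + Ab i *\<^sub>v Y s (Suc i)) $ a = 0\<^sub>v (t i) $ a"
        using eqn[of s i a] s i a Ec Yc by (simp add: add.commute)
    qed (use Ec in simp)
  qed
  define J where "J = min m k"
  have J: "1 \<le> J" "J \<le> m" "J \<le> k" using m k unfolding J_def by auto
  have chain: "Y (l - 1) l = Zp l J *\<^sub>v Y (J - 1) J" if "1 \<le> l" "l \<le> J" for l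
    using that
  proof (induction "J - l" arbitrary: l)
    case 0 then have "l = J" by simp
    then show ?case using Yc by (simp add: Zp_same)
  next
    case (Suc d)
    then have l: "l < J" "1 \<le> l" "l < m" "l < k" using J by auto
    have dd: "d = J - Suc l" using Suc.hyps(2) by simp
    have IH: "Y l (Suc l) = Zp (Suc l) J *\<^sub>v Y (J - 1) J" using Suc.hyps(1)[OF dd] l by simp
    have Zlc: "Z l \<in> carrier_mat (t l) (t (Suc l))" using Z_c l by auto
    have Zc: "Zp (Suc l) J \<in> carrier_mat (t (Suc l)) (t J)" using Zp_props[of "Suc l" J] l J by auto
    have "Y (l - 1) l = Z l *\<^sub>v Y l (Suc l)" using c2[of l l] l by simp
    also have "\<dots> = Z l *\<^sub>v (Zp (Suc l) J *\<^sub>v Y (J - 1) J)" using IH by simp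
    also have "\<dots> = (Z l * Zp (Suc l) J) *\<^sub>v Y (J - 1) J" using Zlc Zc Yc by simp
    also have "\<dots> = Zp l J *\<^sub>v Y (J - 1) J" using Zp_rec[OF l(1)] by simp
    finally show ?case .
  qed
  have Y01: "Y 0 1 = Zp 1 J *\<^sub>v Y (J - 1) J" using chain[of 1] J by simp
  have ev: "eval_vec x 0 $ (boff t i + a) = Y 0 i $ a" if "1 \<le> i" "i \<le> k" "a < t i" for i a
  proof -
    have "boff t i + a < n" using blk_le[of i] that by simp
    then show ?thesis unfolding eval0_cv Y_def using that x by simp
  qed
  have R1: "\<forall>r. t 1 \<le> r \<longrightarrow> r < n \<longrightarrow> eval_vec x 0 $ r = 0"
  proof (intro allI impI)
    fix r assume r: "t 1 \<le> r" "r < n"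
    obtain i a where ia: "1 \<le> i" "i \<le> k" "a < t i" "r = boff t i + a" using decomp[OF r(2)] by blast
    have "i \<noteq> 1" using ia r by auto
    then obtain i' where i': "i = Suc i'" "1 \<le> i'" "i' < k" using ia by (cases i) auto
    show "eval_vec x 0 $ r = 0" using ev[OF ia(1-3)] c1[OF i'(2,3)] ia i' by simp
  qed
  have R2: "m \<le> k \<longrightarrow> (\<forall>r. t m \<le> r \<longrightarrow> r < n \<longrightarrow> eval_vec x 0 $ r = 0)"
  proof (intro impI allI)
    fix r assume mk: "m \<le> k" and r: "t m \<le> r" "r < n"
    then have Jm: "J = m" unfolding J_def by simp
    show "eval_vec x 0 $ r = 0"
    proof (cases "r < t 1")
      case True
      have Zc: "Zp 1 m \<in> carrier_mat (t 1) (t m)" "utz (Zp 1 m)" using Zp_props[of 1 m] m mk by auto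
      have "eval_vec x 0 $ r = Y 0 1 $ r" using ev[of 1 r] True k by simp
      also have "\<dots> = (\<Sum>b\<in>{0..<t m}. Zp 1 m $$ (r, b) * Y (m - 1) m $ b)"
        unfolding Y01 Jm using Zc True Yc by (simp add: scalar_prod_def Yd)
      also have "\<dots> = 0" using Zc r True unfolding utz_def by (intro sum.neutral) auto
      finally show ?thesis .
    next
      case False then show ?thesis using R1 r by simp
    qed
  qed
  have R3: "k < m \<longrightarrow> eval_vec x 0 = 0\<^sub>v n"
  proof
    assume km: "k < m"
    then have Jk: "J = k" unfolding J_def by simp
    have Ec: "E k \<in> carrier_mat (t k) (t k)" using E_c k by auto
    have "E k *\<^sub>v Y (k - 1) k = 0\<^sub>v (t k)"
    proof (rule eq_vecI)
      fix a assume "a < dim_vec (0\<^sub>v (t k) :: complex vec)"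
      then have a: "a < t k" by simp
      show "(E k *\<^sub>v Y (k - 1) k) $ a = 0\<^sub>v (t k) $ a" using eqn[of k k a] km k a by simp
    qed (use Ec in simp)
    then have Yk: "Y (k - 1) k = 0\<^sub>v (t k)" using ker_zero_inv[OF Ec E_u E_i Yc] k by auto
    have Zc: "Zp 1 k \<in> carrier_mat (t 1) (t k)" using Zp_props[of 1 k] k by auto
    have "Zp 1 k *\<^sub>v 0\<^sub>v (t k) = 0\<^sub>v (t 1)" using Zc by (intro eq_vecI) (auto simp: scalar_prod_def)
    then have Y0: "Y 0 1 = 0\<^sub>v (t 1)" using Y01 unfolding Jk Yk by simp
    show "eval_vec x 0 = 0\<^sub>v n"
    proof (rule eq_vecI)
      fix r assume "r < dim_vec (0\<^sub>v n :: complex vec)"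
      then have r: "r < n" by simp
      show "eval_vec x 0 $ r = 0\<^sub>v n $ r"
      proof (cases "r < t 1")
        case True
        then show ?thesis using ev[of 1 r] Y0 k r by simp
      next
        case False then show ?thesis using R1 r by simp
      qed
    qed (use x in \<open>simp add: eval_vec_def\<close>)
  qed
  show ?thesis using R1 R2 R3 by blast
qed

end

lemma mat_of_cols_mult_index:
  assumes "set cs \<subseteq> carrier_vec m" "v \<in> carrier_vec (length cs)" "a < m"
  shows "(mat_of_cols m cs *\<^sub>v v) $ a = (\<Sum>q<length cs. cs ! q $ a * v $ q)"
  using assms by (simp add: scalar_prod_def mat_of_cols_def atLeast0LessThan)

lemma eval_vec_carrier[simp]: "x \<in> carrier_vec m \<Longrightarrow> eval_vec x z \<in> carrier_vec m"
  unfolding eval_vec_def by simp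

context pen begin

definition jof :: "nat \<Rightarrow> nat" where "jof q = Max {j \<in> {1..k}. q < t j}"

lemma jof_props:
  assumes q: "q < t 1"
  shows "1 \<le> jof q" "jof q \<le> k" "q < t (jof q)"
    "\<And>m. 1 \<le> m \<Longrightarrow> m \<le> k \<Longrightarrow> q < t m \<longleftrightarrow> m \<le> jof q"
proof -
  let ?S = "{j \<in> {1..k}. q < t j}"
  have fin: "finite ?S" by simp
  have ne: "1 \<in> ?S" using q k by auto
  have mem: "jof q \<in> ?S" unfolding jof_def using Max_in[OF fin] ne by blast
  then show "1 \<le> jof q" "jof q \<le> k" "q < t (jof q)" by auto
  fix m assume m: "1 \<le> m" "m \<le> k"
  show "q < t m \<longleftrightarrow> m \<le> jof q"
  proof
    assume "q < t m" then have "m \<in> ?S" using m by auto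
    then show "m \<le> jof q" unfolding jof_def using Max_ge[OF fin] by blast
  next
    assume "m \<le> jof q"
    then have "t (jof q) \<le> t m" using t_antimono[of m "jof q"] m mem by auto
    then show "q < t m" using mem by auto
  qed
qed

lemma jof_anti: assumes "q \<le> q'" "q' < t 1" shows "jof q' \<le> jof q"
proof -
  have q: "q < t 1" using assms by simp
  have "q < t (jof q')" using jof_props(3)[OF assms(2)] assms(1) by simp
  then show ?thesis using jof_props(4)[OF q, of "jof q'"] jof_props(1,2)[OF assms(2)] by simp
qed

definition F where "F q = (col (Xm (jof q)) q, jof q)"

lemma tsz_le: "1 \<le> m \<Longrightarrow> m \<le> k \<Longrightarrow> tsz t k (Suc m) \<le> t m"
  unfolding tsz_def using t_mono by auto

lemma Qlist_gen:
  assumes "1 \<le> m" "m \<le> Suc k"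
  shows "concat (map (Qcols t k E Ahat) (rev [m..<Suc k])) = map F [0..<tsz t k m]"
  using assms
proof (induction "Suc k - m" arbitrary: m)
  case 0 then have "m = Suc k" by simp
  then show ?case by (simp add: tsz_def)
next
  case (Suc d)
  then have m: "1 \<le> m" "m \<le> k" by auto
  have dd: "d = Suc k - Suc m" using Suc.hyps(2) by simp
  have IH: "concat (map (Qcols t k E Ahat) (rev [Suc m..<Suc k])) = map F [0..<tsz t k (Suc m)]"
    using Suc.hyps(1)[OF dd] m by simp
  have r: "rev [m..<Suc k] = rev [Suc m..<Suc k] @ [m]" using m by (simp add: upt_conv_Cons)
  have le: "tsz t k (Suc m) \<le> t m" using tsz_le m by simp
  have t1: "t m \<le> t 1" using t_antimono[of 1 m] m by simp
  have Q: "Qcols t k E Ahat m = map F [tsz t k (Suc m)..<t m]"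
    unfolding Qcols_def
  proof (intro map_cong refl)
    fix p assume p: "p \<in> set [tsz t k (Suc m)..<t m]"
    have pt: "p < t 1" "p < t m" using p t1 by auto
    have "m \<le> jof p" using jof_props(4)[OF pt(1) m] pt by simp
    moreover have "\<not> Suc m \<le> jof p"
    proof
      assume a: "Suc m \<le> jof p"
      then have "Suc m \<le> k" using jof_props(2)[OF pt(1)] by simp
      then have "p < t (Suc m)" using jof_props(4)[OF pt(1), of "Suc m"] a by simp
      then show False using p \<open>Suc m \<le> k\<close> unfolding tsz_def by auto
    qed
    ultimately have "jof p = m" by simp
    then show "(col (Xm m) p, m) = F p" unfolding F_def by simp
  qed
  have "concat (map (Qcols t k E Ahat) (rev [m..<Suc k]))
      = map F [0..<tsz t k (Suc m)] @ map F [tsz t k (Suc m)..<t m]"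
    unfolding r using IH Q by simp
  also have "\<dots> = map F [0..<t m]"
  proof -
    have "[0..<t m] = [0..<tsz t k (Suc m)] @ [tsz t k (Suc m)..<t m]"
      using upt_add_eq_append[of 0 "tsz t k (Suc m)" "t m - tsz t k (Suc m)"] le by simp
    then show ?thesis by simp
  qed
  also have "t m = tsz t k m" unfolding tsz_def using m by simp
  finally show ?case .
qed

lemma Qlist: "all_Qcols t k E Ahat = map F [0..<t 1]"
  unfolding all_Qcols_def using Qlist_gen[of 1] k by (simp add: tsz_def)

abbreviation ev where "ev q \<equiv> eval_vec (col (Xm (jof q)) q) 0"

lemma ev_carrier: "ev q \<in> carrier_vec n" using Xcol_carrier by simp

lemma ev_entry: "q < t 1 \<Longrightarrow> r < t 1 \<Longrightarrow> ev q $ r = Zp 1 (jof q) $$ (r, q)"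
  using Xcol_eval_entry jof_props by simp

lemma ev_low: assumes q: "q < t 1" and r: "q < r" "r < n" shows "ev q $ r = 0"
proof (cases "r < t 1")
  case True
  have "utz (Zp 1 (jof q))" "Zp 1 (jof q) \<in> carrier_mat (t 1) (t (jof q))"
    using Zp_props[of 1 "jof q"] jof_props[OF q] by auto
  then show ?thesis using ev_entry[OF q True] r True jof_props(3)[OF q] unfolding utz_def by auto
next
  case False
  then show ?thesis using Xcol_eval_high[of "jof q" q r] jof_props[OF q] r by simp
qed

lemma ev_diag: assumes q: "q < t 1" shows "ev q $ q \<noteq> 0"
  using ev_entry[OF q q] Zp_props[of 1 "jof q"] jof_props[OF q] by auto

lemma full_rank_Q: "full_col_rank n (map ev [0..<t 1])"
proof -
  have cs: "set (map ev [0..<t 1]) \<subseteq> carrier_vec n" using ev_carrier by auto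
  have t1n: "t 1 \<le> n" using blk_le[of 1] k by simp
  show ?thesis unfolding full_col_rank_iff[OF cs]
  proof (intro ballI impI)
    fix v assume v: "v \<in> carrier_vec (length (map ev [0..<t 1]))"
      and Mv: "mat_of_cols n (map ev [0..<t 1]) *\<^sub>v v = 0\<^sub>v n"
    have vc: "v \<in> carrier_vec (t 1)" using v by simp
    define U where "U = mat (t 1) (t 1) (\<lambda>(r,q). ev q $ r)"
    have Uc: "U \<in> carrier_mat (t 1) (t 1)" unfolding U_def by simp
    have Uu: "utz U" unfolding U_def utz_def using ev_low t1n by auto
    have Ud: "\<And>a. a < t 1 \<Longrightarrow> U $$ (a,a) \<noteq> 0" unfolding U_def using ev_diag by simp
    have z: "(U *\<^sub>v v) $ a = 0" if a: "0 \<le> a" "a < t 1" for a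
    proof -
      have "(U *\<^sub>v v) $ a = (\<Sum>q<t 1. ev q $ a * v $ q)"
        using a vc Uc unfolding U_def by (simp add: scalar_prod_def atLeast0LessThan)
      also have "\<dots> = (mat_of_cols n (map ev [0..<t 1]) *\<^sub>v v) $ a"
        using mat_of_cols_mult_index[OF cs v, of a] a t1n by simp
      also have "\<dots> = 0" using Mv a t1n by simp
      finally show ?thesis .
    qed
    have "\<And>a. a < t 1 \<Longrightarrow> v $ a = 0" using back_subst[OF Uc Uu Ud vc z] by auto
    then show "v = 0\<^sub>v (length (map ev [0..<t 1]))" using vc by (intro eq_vecI) auto
  qed
qed


lemma max_root: "maximal_root_polys P [] 0 (all_Qcols t k E Ahat)"
proof -
  let ?rs = "map F [0..<t 1]"
  have fst_rs: "map fst ?rs = map (\<lambda>q. col (Xm (jof q)) q) [0..<t 1]" by (simp add: F_def)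
  have indep: "indep_zero_dirs P [] 0 ?rs"
    unfolding indep_zero_dirs_def
  proof
    show "\<forall>(r, kk)\<in>set ?rs. zero_direction P 0 r kk"
      using Xcol_zero_dir jof_props by (auto simp: F_def)
    show "full_col_rank (dim_col P) (map (\<lambda>v. eval_vec v 0) ([] @ map fst ?rs))"
      using full_rank_Q unfolding fst_rs by (simp add: comp_def)
  qed
  have compl: "\<not> (\<exists>rs'. indep_zero_dirs P [] 0 rs' \<and> length rs' > length ?rs)"
  proof
    assume "\<exists>rs'. indep_zero_dirs P [] 0 rs' \<and> length rs' > length ?rs"
    then obtain rs' where rs': "indep_zero_dirs P [] 0 rs'" "length rs' > t 1" by auto
    let ?cs = "map (\<lambda>v. eval_vec v 0) ([] @ map fst rs')"
    have zd: "\<And>r kk. (r, kk) \<in> set rs' \<Longrightarrow> zero_direction P 0 r kk"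
      using rs'(1) unfolding indep_zero_dirs_def by auto
    have cs: "set ?cs \<subseteq> carrier_vec n"
      using zd unfolding zero_direction_def by fastforce
    have supp: "c $ r = 0" if "c \<in> set ?cs" "t 1 \<le> r" "r < n" for c r
    proof -
      from that(1) obtain y where y: "y \<in> set (map fst rs')" "c = eval_vec y 0" by auto
      then obtain x kk where x: "(x, kk) \<in> set rs'" "c = eval_vec x 0" by auto
      have "zero_direction P 0 x kk" using zd x by simp
      then obtain w where "kk \<ge> 1" "x \<in> carrier_vec n" "w \<in> carrier_vec n"
        "P *\<^sub>v x = ([:-0, 1:] ^ kk) \<cdot>\<^sub>v w" unfolding zero_direction_def by auto
      then show ?thesis using root_analysis[of x w kk] x that by auto
    qed
    have "\<not> full_col_rank n ?cs" by (rule not_full_col_rank_support[OF cs supp]) (use rs' in auto)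
    then show False using rs'(1) unfolding indep_zero_dirs_def by simp
  qed
  have ord: "ordered_zero_dirs ?rs"
    unfolding ordered_zero_dirs_def
  proof
    show "sorted_wrt (\<ge>) (map snd ?rs)"
      unfolding sorted_wrt_iff_nth_less
    proof (intro allI impI)
      fix i j assume ij: "i < j" "j < length (map snd ?rs)"
      then have "jof j \<le> jof i" using jof_anti[of i j] by simp
      then show "map snd ?rs ! j \<le> map snd ?rs ! i" using ij by (simp add: F_def)
    qed
    have "0 < jof q" if "q < t 1" for q using jof_props(1)[OF that] by simp
    then show "\<forall>(r, kk)\<in>set ?rs. kk > 0" by (auto simp: F_def)
  qed
  have maxi: "\<not> (\<exists>j < length ?rs. \<exists>r' k'. root_polynomial P [] 0 r' k' \<and> k' > snd (?rs ! j) \<and>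
          full_col_rank (dim_col P) (map (\<lambda>v. eval_vec v 0) ([] @ map fst (take j ?rs) @ [r'])))"
  proof
    assume "\<exists>j < length ?rs. \<exists>r' k'. root_polynomial P [] 0 r' k' \<and> k' > snd (?rs ! j) \<and>
          full_col_rank (dim_col P) (map (\<lambda>v. eval_vec v 0) ([] @ map fst (take j ?rs) @ [r']))"
    then obtain j r' k' where j0: "j < length ?rs" and rp: "root_polynomial P [] 0 r' k'"
      and kk0: "k' > snd (?rs ! j)"
      and fr0: "full_col_rank (dim_col P) (map (\<lambda>v. eval_vec v 0) ([] @ map fst (take j ?rs) @ [r']))"
      by blast
    have j: "j < t 1" using j0 by simp
    have kk: "k' > jof j" using kk0 j by (simp add: F_def)
    have fr: "full_col_rank n (map (\<lambda>v. eval_vec v 0) ([] @ map fst (take j ?rs) @ [r']))"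
      using fr0 by simp
    obtain w where w: "k' \<ge> 1" "r' \<in> carrier_vec n" "w \<in> carrier_vec n"
        "P *\<^sub>v r' = ([:-0, 1:] ^ k') \<cdot>\<^sub>v w" "eval_vec r' 0 \<noteq> 0\<^sub>v n"
      using rp unfolding root_polynomial_def zero_direction_def by auto
    note RA = root_analysis[OF w(2,3,1,4)]
    have k'k: "k' \<le> k"
    proof (rule ccontr)
      assume "\<not> k' \<le> k"
      then have "k < k'" by simp
      then have "eval_vec r' 0 = 0\<^sub>v n" using RA by blast
      with w(5) show False by simp
    qed
    have jk: "Suc (jof j) \<le> k" using kk k'k by simp
    have "t (Suc (jof j)) \<le> j" using jof_props(4)[OF j, of "Suc (jof j)"] jk by auto
    moreover have "t k' \<le> t (Suc (jof j))" using t_antimono[of "Suc (jof j)" k'] kk k'k by simp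
    ultimately have tk: "t k' \<le> j" by simp
    let ?cs = "map (\<lambda>v. eval_vec v 0) ([] @ map fst (take j ?rs) @ [r'])"
    have cs_eq: "?cs = map ev [0..<j] @ [eval_vec r' 0]"
      using j by (simp add: take_map F_def)
    have cs: "set ?cs \<subseteq> carrier_vec n" unfolding cs_eq using ev_carrier w(2) by auto
    have supp: "c $ r = 0" if "c \<in> set ?cs" "j \<le> r" "r < n" for c r
    proof -
      from that(1) consider q where "q < j" "c = ev q" | "c = eval_vec r' 0" unfolding cs_eq by auto
      then show ?thesis
      proof cases
        case 1 then show ?thesis using ev_low[of q r] j that by simp
      next
        case 2 then show ?thesis using RA k'k tk that by auto
      qed
    qed
    have lcs: "length ?cs = Suc j" using j by simp
    have "\<not> full_col_rank n ?cs"
    proof (rule not_full_col_rank_support[where m=j, OF cs])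
      show "\<And>c r. c \<in> set ?cs \<Longrightarrow> j \<le> r \<Longrightarrow> r < n \<Longrightarrow> c $ r = 0" by (rule supp)
      show "j < length ?cs" unfolding lcs by (rule lessI)
    qed
    then show False using fr by simp
  qed
  have "maximal_root_polys P [] 0 ?rs"
    unfolding maximal_root_polys_def complete_zero_dirs_def
    using indep compl ord maxi by (intro conjI)
  then show ?thesis unfolding Qlist .
qed

end

theorem theorem5p10:
  fixes k :: nat and t :: "nat \<Rightarrow> nat"
    and E :: "nat \<Rightarrow> complex mat" and Ahat :: "nat \<Rightarrow> complex mat"
  assumes k: "k \<ge> 1"
    and t_pos: "\<forall>i \<in> {1..k}. t i \<ge> 1"
    and t_mono: "\<forall>i \<in> {1..<k}. t i \<ge> t (Suc i)"
    and E_dim: "\<forall>i \<in> {1..k}. E i \<in> carrier_mat (t i) (t i)"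
    and E_ut: "\<forall>i \<in> {1..k}. upper_triangular (E i) \<and> invertible_mat (E i)"
    and Ahat_dim: "\<forall>i \<in> {1..<k}. Ahat i \<in> carrier_mat (t (Suc i)) (t (Suc i))"
    and Ahat_ut: "\<forall>i \<in> {1..<k}. upper_triangular (Ahat i) \<and> invertible_mat (Ahat i)"
  shows "(\<forall>\<mu>. is_eigenvalue (pencil (A0 t k Ahat) (E0 t k E)) \<mu> \<longleftrightarrow> \<mu> = 0) \<and>
         (\<forall>N. is_right_minimal_basis (pencil (A0 t k Ahat) (E0 t k E)) N \<longrightarrow>
              maximal_root_polys (pencil (A0 t k Ahat) (E0 t k E)) N 0 (all_Qcols t k E Ahat))"
proof -
  interpret pen k t E Ahat
    using k t_pos t_mono E_dim E_ut Ahat_dim Ahat_ut by (simp add: pen_def)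
  show ?thesis using eig min_basis_empty max_root by auto
qed

end
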